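(* Let $v:\mathbb X\times\mathbb X\to[0,\infty]$ be a measurable symmetric pair potential and $z:\mathbb X\to[0,\infty)$ measurable. The following are equivalent: (i) $T_q^\circ(z)<\infty$ for all $q\in\mathbb X$; (ii) there exists a measurable function $a:\mathbb X\to[0,\infty)$ such that $\int_{\mathbb X}|f(q,y)|e^{a(y)}\,d\lambda_z(y)\le a(q)$ for all $q\in\mathbb X$.
   Context: $(\mathbb X,\mathcal X)$ is a complete separable metric space with Borel $\sigma$-algebra, $\lambda$ a measure on it finite on bounded sets, $\lambda_z(dx)=z(x)\lambda(dx)$, $f(x,y)=e^{-v(x,y)}-1$ (with $e^{-\infty}=0$). For $n\in\mathbb N$, $\mathcal T_n^\circ$ is the set of (labelled) trees with vertex set $\{0,1,\dots,n\}$. For $q\in\mathbb X$ define $$T_q^\circ(z)=1+\sum_{n=1}^\infty\frac1{n!}\int_{\mathbb X^n}\sum_{T\in\mathcal T_n^\circ}\prod_{\{i,j\}\in E(T)}|f(x_i,x_j)|\,d\lambda_z(x_1)\cdots d\lambda_z(x_n),\qquad x_0:=q,$$ a quantity in $[1,\infty]$. *)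

theory Defs
  imports "HOL-Analysis.Analysis"
begin

text \<open>Labelled trees on a finite vertex set V: a set of 2-element edges inside V that
  connects V and has exactly card V - 1 edges (equivalently, a connected acyclic graph).\<close>
definition is_tree :: "nat set \<Rightarrow> nat set set \<Rightarrow> bool" where
  "is_tree V E \<longleftrightarrow>
     E \<subseteq> {e. \<exists>i j. e = {i, j} \<and> i \<noteq> j \<and> i \<in> V \<and> j \<in> V} \<and>
     card E + 1 = card V \<and>
     (\<forall>i\<in>V. \<forall>j\<in>V. (i, j) \<in> {(a, b). {a, b} \<in> E}\<^sup>*)"

definition trees :: "nat \<Rightarrow> nat set set set" where
  "trees n = {E. is_tree {0..n} E}"

text \<open>|f(x,y)| = |exp(-v(x,y)) - 1| = 1 - exp(-v(x,y)), with exp(-\<infinity>) = 0.\<close>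
definition mayer_abs :: "('a \<Rightarrow> 'a \<Rightarrow> ennreal) \<Rightarrow> 'a \<Rightarrow> 'a \<Rightarrow> ennreal" where
  "mayer_abs v x y = (if v x y = top then 1 else ennreal (1 - exp (- enn2real (v x y))))"

definition lam_z :: "'a measure \<Rightarrow> ('a \<Rightarrow> real) \<Rightarrow> 'a measure" where
  "lam_z lam z = density lam (\<lambda>x. ennreal (z x))"

definition T_circ :: "'a measure \<Rightarrow> ('a \<Rightarrow> 'a \<Rightarrow> ennreal) \<Rightarrow> ('a \<Rightarrow> real) \<Rightarrow> 'a \<Rightarrow> ennreal" where
  "T_circ lam v z q = 1 + (\<Sum>m. let n = Suc m in
      ennreal (1 / fact n) *
      (\<integral>\<^sup>+ x. (\<Sum>E\<in>trees n. \<Prod>e\<in>E. mayer_abs v ((x(0 := q)) (Min e)) ((x(0 := q)) (Max e)))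
        \<partial>(PiM {1..n} (\<lambda>_. lam_z lam z))))"

end

theory Submission
  imports Defs "HOL-Analysis.Analysis" "HOL-Computational_Algebra.Formal_Power_Series"
begin

unbundle no vec_syntax
unbundle fps_syntax

lemma fps_pow_nonneg:
  fixes B :: "real fps"
  assumes "\<And>n. B $ n \<ge> 0"
  shows "(B ^ k) $ n \<ge> 0"
proof (induction k arbitrary: n)
  case 0 then show ?case by (simp add: fps_one_nth)
next
  case (Suc k) then show ?case
    by (simp add: fps_mult_nth assms sum_nonneg)
qed

lemma fps_mult_partial:
  fixes F H :: "real fps"
  shows "(\<Sum>n\<le>N. (F * H) $ n) = (\<Sum>(i,j)\<in>{(i,j). i + j \<le> N}. F $ i * H $ j)"
  by (simp add: fps_mult_nth atLeast0AtMost sum.triangle_reindex_eq[where g="\<lambda>i j. F $ i * H $ j"])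

lemma fps_pow_partial_le:
  fixes B :: "real fps"
  assumes nn: "\<And>n. B $ n \<ge> 0"
  shows "(\<Sum>n\<le>N. (B ^ k) $ n) \<le> (\<Sum>n\<le>N. B $ n) ^ k"
proof (induction k)
  case 0 then show ?case by (simp add: fps_one_nth)
next
  case (Suc k)
  have "(\<Sum>n\<le>N. (B ^ Suc k) $ n) = (\<Sum>(i,j)\<in>{(i,j). i + j \<le> N}. B $ i * (B^k) $ j)"
    by (simp add: fps_mult_partial)
  also have "\<dots> \<le> (\<Sum>(i,j)\<in>{..N} \<times> {..N}. B $ i * (B^k) $ j)"
    by (rule sum_mono2) (auto intro!: mult_nonneg_nonneg nn fps_pow_nonneg)
  also have "\<dots> = (\<Sum>i\<le>N. B $ i) * (\<Sum>j\<le>N. (B^k) $ j)"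
    by (simp add: sum_product sum.cartesian_product)
  also have "\<dots> \<le> (\<Sum>i\<le>N. B $ i) * (\<Sum>n\<le>N. B $ n) ^ k"
    by (rule mult_left_mono[OF Suc]) (auto intro: sum_nonneg nn)
  finally show ?case by simp
qed

lemma fps_pow_partial_ge:
  fixes B :: "real fps"
  assumes nn: "\<And>n. B $ n \<ge> 0"
  shows "(\<Sum>n\<le>M. B $ n) ^ k \<le> (\<Sum>n\<le>k*M. (B ^ k) $ n)"
proof (induction k)
  case 0 then show ?case by (simp add: fps_one_nth)
next
  case (Suc k)
  have "(\<Sum>n\<le>M. B $ n) ^ Suc k \<le> (\<Sum>i\<le>M. B $ i) * (\<Sum>j\<le>k*M. (B^k) $ j)"
    by (simp, rule mult_left_mono[OF Suc]) (auto intro: sum_nonneg nn)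
  also have "\<dots> = (\<Sum>(i,j)\<in>{..M} \<times> {..k*M}. B $ i * (B^k) $ j)"
    by (simp add: sum_product sum.cartesian_product)
  also have "\<dots> \<le> (\<Sum>(i,j)\<in>{(i,j). i + j \<le> Suc k * M}. B $ i * (B^k) $ j)"
  proof (rule sum_mono2)
    show "finite {(i, j). i + j \<le> Suc k * M}"
      by (rule finite_subset[of _ "{..Suc k * M} \<times> {..Suc k * M}"]) auto
  qed (auto intro!: mult_nonneg_nonneg nn fps_pow_nonneg)
  also have "\<dots> = (\<Sum>n\<le>Suc k * M. (B ^ Suc k) $ n)"
    by (simp add: fps_mult_partial)
  finally show ?case .
qed

definition Bfps :: "(nat \<Rightarrow> real) \<Rightarrow> real fps" where
  "Bfps b = Abs_fps (\<lambda>n. if n = 0 then 0 else b (n - 1))"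

definition Efps :: "(nat \<Rightarrow> real) \<Rightarrow> real fps" where
  "Efps b = fps_exp 1 oo Bfps b"

lemma Efps_0: "Efps b $ 0 = 1"
  by (simp add: Efps_def)

lemma Efps_rec:
  "of_nat (Suc n) * Efps b $ Suc n = (\<Sum>j\<le>n. of_nat (Suc j) * b j * Efps b $ (n - j))"
proof -
  have B0: "Bfps b $ 0 = 0" by (simp add: Bfps_def)
  have "fps_deriv (Efps b) = (fps_deriv (fps_exp 1) oo Bfps b) * fps_deriv (Bfps b)"
    unfolding Efps_def by (rule fps_compose_deriv[OF B0])
  also have "\<dots> = Efps b * fps_deriv (Bfps b)"
    by (simp add: Efps_def)
  finally have "fps_deriv (Efps b) $ n = (Efps b * fps_deriv (Bfps b)) $ n" by simp
  then have "of_nat (Suc n) * Efps b $ Suc n = (\<Sum>i=0..n. Efps b $ i * (of_nat (Suc (n - i)) * b (n - i)))"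
    by (simp add: fps_mult_nth Bfps_def)
  also have "\<dots> = (\<Sum>j\<le>n. of_nat (Suc j) * b j * Efps b $ (n - j))"
    by (rule sum.reindex_bij_witness[where i="\<lambda>j. n - j" and j="\<lambda>i. n - i"]) auto
  finally show ?thesis .
qed

lemma seq_eq_Efps:
  fixes a b :: "nat \<Rightarrow> real"
  assumes a0: "a 0 = 1"
    and rec: "\<And>n. Suc n \<le> N \<Longrightarrow> of_nat (Suc n) * a (Suc n) = (\<Sum>j\<le>n. of_nat (Suc j) * b j * a (n - j))"
  shows "n \<le> N \<Longrightarrow> a n = Efps b $ n"
proof (induction n rule: less_induct)
  case (less n)
  show ?case
  proof (cases n)
    case 0 then show ?thesis by (simp add: a0 Efps_0)
  next
    case (Suc m)
    have "of_nat (Suc m) * a (Suc m) = (\<Sum>j\<le>m. of_nat (Suc j) * b j * a (m - j))"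
      using rec less.prems Suc by blast
    also have "\<dots> = (\<Sum>j\<le>m. of_nat (Suc j) * b j * Efps b $ (m - j))"
      by (intro sum.cong refl) (use less Suc in auto)
    also have "\<dots> = of_nat (Suc m) * Efps b $ Suc m" by (rule Efps_rec[symmetric])
    finally show ?thesis using Suc by (simp del: of_nat_Suc)
  qed
qed

lemma Efps_nth: "Efps b $ n = (\<Sum>i\<le>n. (Bfps b ^ i) $ n / fact i)"
  by (simp add: Efps_def fps_compose_nth atLeast0AtMost)

lemma Bfps_nonneg: "(\<And>j. b j \<ge> 0) \<Longrightarrow> Bfps b $ n \<ge> 0"
  by (simp add: Bfps_def)

lemma Bfps_partial: "(\<Sum>n\<le>N. Bfps b $ n) = (\<Sum>j<N. b j)"
proof (induction N)
  case 0 then show ?case by (simp add: Bfps_def)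
next
  case (Suc N) then show ?case by (simp add: Bfps_def)
qed

lemma Bfps_pow_zero: "k > n \<Longrightarrow> (Bfps b ^ k) $ n = 0"
  using startsby_zero_power_prefix[of "Bfps b" k] by (simp add: Bfps_def)

lemma exp_partial_le:
  fixes x :: real assumes "x \<ge> 0"
  shows "(\<Sum>i\<le>N. x ^ i / fact i) \<le> exp x"
proof -
  have "(\<lambda>n. x^n /\<^sub>R fact n) sums exp x" by (rule exp_converges)
  then have s: "summable (\<lambda>n. x^n / fact n)" and e: "exp x = (\<Sum>n. x^n / fact n)"
    by (auto simp: sums_iff divide_inverse mult.commute)
  have "(\<Sum>i<Suc N. x ^ i / fact i) \<le> exp x"
    unfolding e by (rule sum_le_suminf[OF s]) (auto simp: assms)
  then show ?thesis by (simp add: lessThan_Suc_atMost)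
qed

lemma seq_upper:
  fixes a b :: "nat \<Rightarrow> real"
  assumes a0: "a 0 = 1" and bnn: "\<And>j. b j \<ge> 0"
    and rec: "\<And>n. Suc n \<le> N \<Longrightarrow> of_nat (Suc n) * a (Suc n) = (\<Sum>j\<le>n. of_nat (Suc j) * b j * a (n - j))"
  shows "(\<Sum>n\<le>N. a n) \<le> exp (\<Sum>j<N. b j)"
proof -
  let ?B = "Bfps b"
  have nn: "\<And>n. ?B $ n \<ge> 0" by (rule Bfps_nonneg[OF bnn])
  have "(\<Sum>n\<le>N. a n) = (\<Sum>n\<le>N. \<Sum>i\<le>n. (?B ^ i) $ n / fact i)"
    using seq_eq_Efps[OF a0 rec] by (simp add: Efps_nth)
  also have "\<dots> \<le> (\<Sum>n\<le>N. \<Sum>i\<le>N. (?B ^ i) $ n / fact i)"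
    by (intro sum_mono sum_mono2) (auto intro!: divide_nonneg_pos fps_pow_nonneg nn)
  also have "\<dots> = (\<Sum>i\<le>N. (\<Sum>n\<le>N. (?B ^ i) $ n) / fact i)"
    by (subst sum.swap) (simp add: sum_divide_distrib)
  also have "\<dots> \<le> (\<Sum>i\<le>N. (\<Sum>n\<le>N. ?B $ n) ^ i / fact i)"
    by (intro sum_mono divide_right_mono fps_pow_partial_le nn) auto
  also have "\<dots> \<le> exp (\<Sum>n\<le>N. ?B $ n)"
    by (rule exp_partial_le) (auto intro: sum_nonneg nn)
  finally show ?thesis by (simp add: Bfps_partial)
qed

lemma seq_lower:
  fixes a b :: "nat \<Rightarrow> real"
  assumes a0: "a 0 = 1" and bnn: "\<And>j. b j \<ge> 0"
    and rec: "\<And>n. of_nat (Suc n) * a (Suc n) = (\<Sum>j\<le>n. of_nat (Suc j) * b j * a (n - j))"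
    and summ: "summable a"
  shows "exp (\<Sum>j<K. b j) \<le> suminf a"
proof -
  let ?B = "Bfps b"
  let ?s = "\<Sum>j<K. b j"
  have nn: "\<And>n. ?B $ n \<ge> 0" by (rule Bfps_nonneg[OF bnn])
  have aE: "\<And>n. a n = Efps b $ n" using seq_eq_Efps[OF a0 rec, of n n for n] by auto
  have ann: "\<And>n. a n \<ge> 0"
    by (simp add: aE Efps_nth sum_nonneg fps_pow_nonneg nn)
  have part: "(\<Sum>i\<le>L. ?s ^ i / fact i) \<le> suminf a" for L
  proof -
    have "(\<Sum>i\<le>L. ?s ^ i / fact i) \<le> (\<Sum>i\<le>L. (\<Sum>n\<le>i*K. (?B ^ i) $ n) / fact i)"
      using fps_pow_partial_ge[OF nn, of K] by (intro sum_mono divide_right_mono) (auto simp: Bfps_partial)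
    also have "\<dots> \<le> (\<Sum>i\<le>L. (\<Sum>n\<le>L*K. (?B ^ i) $ n) / fact i)"
      by (intro sum_mono divide_right_mono sum_mono2) (auto intro: fps_pow_nonneg nn)
    also have "\<dots> = (\<Sum>n\<le>L*K. \<Sum>i\<le>L. (?B ^ i) $ n / fact i)"
      by (subst sum.swap) (simp add: sum_divide_distrib)
    also have "\<dots> \<le> (\<Sum>n\<le>L*K. \<Sum>i\<le>n. (?B ^ i) $ n / fact i)"
    proof (rule sum_mono)
      fix n
      have "(\<Sum>i\<le>L. (?B ^ i) $ n / fact i) = (\<Sum>i\<in>{..L} \<inter> {..n}. (?B ^ i) $ n / fact i)"
        by (rule sum.mono_neutral_right) (auto, metis Bfps_pow_zero not_le)
      also have "\<dots> \<le> (\<Sum>i\<le>n. (?B ^ i) $ n / fact i)"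
        by (rule sum_mono2) (auto intro!: divide_nonneg_pos fps_pow_nonneg nn)
      finally show "(\<Sum>i\<le>L. (?B ^ i) $ n / fact i) \<le> (\<Sum>i\<le>n. (?B ^ i) $ n / fact i)" .
    qed
    also have "\<dots> = (\<Sum>n<Suc (L*K). a n)"
      by (simp add: aE Efps_nth lessThan_Suc_atMost)
    also have "\<dots> \<le> suminf a"
      by (rule sum_le_suminf[OF summ]) (auto simp: ann)
    finally show ?thesis .
  qed
  have "(\<lambda>n. ?s^n /\<^sub>R fact n) sums exp ?s" by (rule exp_converges)
  then have "(\<lambda>L. \<Sum>i<Suc L. ?s ^ i / fact i) \<longlonglongrightarrow> exp ?s"
    unfolding sums_def by (intro LIMSEQ_Suc) (simp add: divide_inverse mult.commute)
  then show ?thesis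
    by (rule LIMSEQ_le_const2) (use part in \<open>auto simp: lessThan_Suc_atMost\<close>)
qed


lemma rec_conv:
  fixes Gr gr :: "nat \<Rightarrow> real"
  assumes "Gr (Suc n) = (\<Sum>j\<le>n. of_nat (n choose j) * of_nat (Suc j) * gr j * Gr (n - j))"
  shows "of_nat (Suc n) * (Gr (Suc n) / fact (Suc n)) = (\<Sum>j\<le>n. of_nat (Suc j) * (gr j / fact j) * (Gr (n - j) / fact (n - j)))"
proof -
  have f: "(fact (Suc n)::real) = of_nat (Suc n) * fact n" by (simp only: fact_Suc)
  have "of_nat (Suc n) * (Gr (Suc n) / fact (Suc n)) = Gr (Suc n) / fact n"
    unfolding f by (simp del: of_nat_Suc)
  also have "\<dots> = (\<Sum>j\<le>n. of_nat (n choose j) * of_nat (Suc j) * gr j * Gr (n - j) / fact n)"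
    by (simp add: assms sum_divide_distrib)
  also have "\<dots> = (\<Sum>j\<le>n. of_nat (Suc j) * (gr j / fact j) * (Gr (n - j) / fact (n - j)))"
  proof (intro sum.cong refl)
    fix j assume "j \<in> {..n}"
    then have h: "real (n choose j) = fact n / (fact j * fact (n - j))" by (simp add: binomial_fact)
    show "of_nat (n choose j) * of_nat (Suc j) * gr j * Gr (n - j) / fact n =
               of_nat (Suc j) * (gr j / fact j) * (Gr (n - j) / fact (n - j))"
      by (simp only: h) (simp add: field_simps)
  qed
  finally show ?thesis .
qed

lemma seq_upper_G:
  fixes Gr gr :: "nat \<Rightarrow> real"
  assumes G0: "Gr 0 = 1" and gnn: "\<And>j. gr j \<ge> 0"
    and rec: "\<And>n. Suc n \<le> N \<Longrightarrow> Gr (Suc n) = (\<Sum>j\<le>n. of_nat (n choose j) * of_nat (Suc j) * gr j * Gr (n - j))"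
  shows "(\<Sum>n\<le>N. Gr n / fact n) \<le> exp (\<Sum>j<N. gr j / fact j)"
  by (rule seq_upper[of "\<lambda>n. Gr n / fact n" "\<lambda>j. gr j / fact j"]) (use G0 gnn rec_conv rec in auto)

lemma seq_lower_G:
  fixes Gr gr :: "nat \<Rightarrow> real"
  assumes G0: "Gr 0 = 1" and gnn: "\<And>j. gr j \<ge> 0"
    and rec: "\<And>n. Gr (Suc n) = (\<Sum>j\<le>n. of_nat (n choose j) * of_nat (Suc j) * gr j * Gr (n - j))"
    and summ: "summable (\<lambda>n. Gr n / fact n)"
  shows "exp (\<Sum>j<K. gr j / fact j) \<le> (\<Sum>n. Gr n / fact n)"
  by (rule seq_lower[of "\<lambda>n. Gr n / fact n" "\<lambda>j. gr j / fact j"]) (use G0 gnn rec_conv rec summ in auto)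



definition erel :: "nat set set \<Rightarrow> (nat \<times> nat) set" where
  "erel E = {(a, b). {a, b} \<in> E}"

definition edges :: "nat set \<Rightarrow> nat set set" where
  "edges V = {e. \<exists>i j. e = {i, j} \<and> i \<noteq> j \<and> i \<in> V \<and> j \<in> V}"

lemma is_tree_iff:
  "is_tree V E \<longleftrightarrow> E \<subseteq> edges V \<and> card E + 1 = card V \<and> (\<forall>i\<in>V. \<forall>j\<in>V. (i, j) \<in> (erel E)\<^sup>*)"
  unfolding is_tree_def edges_def erel_def by simp

lemma erel_iff[simp]: "(a, b) \<in> erel E \<longleftrightarrow> {a, b} \<in> E"
  by (simp add: erel_def)

lemma sym_erel: "sym (erel E)"
  by (auto simp: sym_def insert_commute)

lemma rtr_sym: "(a, b) \<in> (erel E)\<^sup>* \<Longrightarrow> (b, a) \<in> (erel E)\<^sup>*"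
  using sym_rtrancl[OF sym_erel] by (auto simp: sym_def)

lemma erel_mono: "E \<subseteq> E' \<Longrightarrow> (a, b) \<in> (erel E)\<^sup>* \<Longrightarrow> (a, b) \<in> (erel E')\<^sup>*"
  by (rule rtrancl_mono[THEN subsetD, of "erel E"]) (auto simp: erel_def)

lemma conn_via_root:
  assumes "\<And>v. v \<in> V \<Longrightarrow> (v, r) \<in> (erel E)\<^sup>*"
  shows "\<forall>i\<in>V. \<forall>j\<in>V. (i, j) \<in> (erel E)\<^sup>*"
  using assms rtr_sym rtrancl_trans by metis

lemma edges_mono: "V \<subseteq> W \<Longrightarrow> edges V \<subseteq> edges W"
  by (auto simp: edges_def)

lemma finite_edges: "finite V \<Longrightarrow> finite (edges V)"
  by (rule finite_subset[of _ "Pow V"]) (auto simp: edges_def)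

lemma edgesE: "e \<in> edges V \<Longrightarrow> (\<And>i j. e = {i, j} \<Longrightarrow> i \<noteq> j \<Longrightarrow> i \<in> V \<Longrightarrow> j \<in> V \<Longrightarrow> P) \<Longrightarrow> P"
  by (auto simp: edges_def)

lemma edgesI: "i \<noteq> j \<Longrightarrow> i \<in> V \<Longrightarrow> j \<in> V \<Longrightarrow> {i, j} \<in> edges V"
  unfolding edges_def by (rule CollectI, rule exI[of _ i], rule exI[of _ j]) simp

lemma edges_sub: "e \<in> edges V \<Longrightarrow> e \<subseteq> V"
  by (auto simp: edges_def)

lemma finite_trees_set: "finite V \<Longrightarrow> finite {E. is_tree V E}"
  by (rule finite_subset[of _ "Pow (edges V)"]) (auto simp: is_tree_iff finite_edges)

lemma tree_finite: "finite V \<Longrightarrow> is_tree V E \<Longrightarrow> finite E"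
  by (auto simp: is_tree_iff intro: finite_subset[OF _ finite_edges])

lemma conn_card:
  assumes V: "finite V" and E: "finite E" and r: "r \<in> V"
    and conn: "\<And>v. v \<in> V \<Longrightarrow> (v, r) \<in> (erel E)\<^sup>*"
  shows "card V \<le> card E + 1"
proof -
  let ?R = "erel E"
  define d where "d v = (LEAST k. (v, r) \<in> ?R ^^ k)" for v
  have ex: "\<exists>k. (v, r) \<in> ?R ^^ k" if "v \<in> V" for v
    using conn[OF that] rtrancl_power by blast
  have dR: "(v, r) \<in> ?R ^^ d v" if "v \<in> V" for v
    unfolding d_def by (rule LeastI_ex[OF ex[OF that]])
  have dle: "d v \<le> k" if "(v, r) \<in> ?R ^^ k" for v k
    unfolding d_def by (rule Least_le) (rule that)
  have dpos: "d v > 0" if "v \<in> V" "v \<noteq> r" for v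
    using dR[OF that(1)] that(2) by (cases "d v") auto
  define par where "par v = (SOME w. (v, w) \<in> ?R \<and> (w, r) \<in> ?R ^^ (d v - 1))" for v
  have par: "(v, par v) \<in> ?R \<and> (par v, r) \<in> ?R ^^ (d v - 1)" if "v \<in> V" "v \<noteq> r" for v
  proof -
    have "(v, r) \<in> ?R ^^ Suc (d v - 1)" using dR[OF that(1)] dpos[OF that] by simp
    then have "\<exists>w. (v, w) \<in> ?R \<and> (w, r) \<in> ?R ^^ (d v - 1)"
      by (rule relpow_Suc_D2)
    then show ?thesis unfolding par_def by (rule someI_ex)
  qed
  define f where "f v = {v, par v}" for v
  have "inj_on f (V - {r})"
  proof (rule inj_onI)
    fix v v' assume v: "v \<in> V - {r}" and v': "v' \<in> V - {r}" and eq: "f v = f v'"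
    show "v = v'"
    proof (rule ccontr)
      assume ne: "v \<noteq> v'"
      with eq have "v = par v'" "v' = par v" by (auto simp: f_def doubleton_eq_iff)
      then have "d v \<le> d v' - 1" "d v' \<le> d v - 1"
        using par[of v'] par[of v] v v' dle by auto
      then show False using dpos[of v] dpos[of v'] v v' by auto
    qed
  qed
  moreover have "f ` (V - {r}) \<subseteq> E"
    using par by (auto simp: f_def)
  ultimately have "card (V - {r}) \<le> card E"
    using card_inj_on_le[OF _ _ E] by blast
  then show ?thesis using r V by auto
qed

lemma glue_tree:
  assumes S: "finite S" "r \<notin> S" and B: "B \<subseteq> S" "c \<in> B"
    and E1: "is_tree B E1" and E0: "is_tree (insert r (S - B)) E0"
  shows "is_tree (insert r S) (insert {r, c} (E0 \<union> E1))"
proof -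
  have fB: "finite B" using B S finite_subset by blast
  have f1: "finite E1" using tree_finite[OF fB E1] .
  have f0: "finite E0" using tree_finite[OF _ E0] S by simp
  have e1: "E1 \<subseteq> edges B" and c1: "card E1 + 1 = card B" and k1: "\<forall>i\<in>B. \<forall>j\<in>B. (i, j) \<in> (erel E1)\<^sup>*"
    using E1 by (auto simp: is_tree_iff)
  have e0: "E0 \<subseteq> edges (insert r (S - B))" and c0: "card E0 + 1 = card (insert r (S - B))"
    and k0: "\<forall>i\<in>insert r (S - B). \<forall>j\<in>insert r (S - B). (i, j) \<in> (erel E0)\<^sup>*"
    using E0 by (auto simp: is_tree_iff)
  have rB: "r \<notin> B" using B S by auto
  have disj: "E0 \<inter> E1 = {}"
  proof -
    { fix e assume "e \<in> E0" "e \<in> E1"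
      then have "e \<subseteq> insert r (S - B)" "e \<subseteq> B" "e \<noteq> {}"
        using e0 e1 edges_sub by (auto simp: edges_def)
      then have False using rB by blast }
    then show ?thesis by blast
  qed
  have notin: "{r, c} \<notin> E0 \<union> E1"
    using e0 e1 edges_sub rB B by (fastforce simp: edges_def doubleton_eq_iff)
  have "card (insert {r, c} (E0 \<union> E1)) = Suc (card E0 + card E1)"
    using notin disj f0 f1 by (simp add: card_Un_disjoint)
  moreover have "card (insert r (S - B)) = card S - card B + 1"
    using S B fB by (simp add: card_Diff_subset)
  moreover have "card B \<le> card S" using B S card_mono by blast
  moreover have "card B \<ge> 1" using B fB by (metis card_0_eq empty_iff less_one not_le)
  ultimately have card: "card (insert {r, c} (E0 \<union> E1)) + 1 = card (insert r S)"
    using c0 c1 S by simp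
  have edg: "insert {r, c} (E0 \<union> E1) \<subseteq> edges (insert r S)"
  proof -
    have "edges B \<subseteq> edges (insert r S)" "edges (insert r (S - B)) \<subseteq> edges (insert r S)"
      using B by (auto intro!: edges_mono)
    moreover have "{r, c} \<in> edges (insert r S)"
      using B S by (intro edgesI) auto
    ultimately show ?thesis using e0 e1 by blast
  qed
  have "(v, r) \<in> (erel (insert {r, c} (E0 \<union> E1)))\<^sup>*" if v: "v \<in> insert r S" for v
  proof (cases "v \<in> B")
    case True
    then have "(v, c) \<in> (erel E1)\<^sup>*" using k1 B by blast
    then have "(v, c) \<in> (erel (insert {r, c} (E0 \<union> E1)))\<^sup>*" by (rule erel_mono[rotated]) auto
    moreover have "(c, r) \<in> erel (insert {r, c} (E0 \<union> E1))" by (simp add: insert_commute)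
    ultimately show ?thesis by (rule rtrancl_into_rtrancl)
  next
    case False
    then have "(v, r) \<in> (erel E0)\<^sup>*" using k0 v by blast
    then show ?thesis by (rule erel_mono[rotated]) auto
  qed
  then have "\<forall>i\<in>insert r S. \<forall>j\<in>insert r S. (i, j) \<in> (erel (insert {r, c} (E0 \<union> E1)))\<^sup>*"
    by (rule conn_via_root)
  then show ?thesis
    unfolding is_tree_iff using edg card by simp
qed


lemma tree_split:
  assumes T: "is_tree (insert r S) E" and S: "finite S" "r \<notin> S" and p: "p \<in> S"
  defines "B \<equiv> {v. (p, v) \<in> (erel {e\<in>E. r \<notin> e})\<^sup>*}"
  shows "B \<subseteq> S \<and> p \<in> B \<and> (\<exists>c\<in>B. is_tree B {e\<in>E. e \<subseteq> B} \<and>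
           is_tree (insert r (S - B)) {e\<in>E. e \<subseteq> insert r (S - B)} \<and>
           E = insert {r, c} ({e\<in>E. e \<subseteq> insert r (S - B)} \<union> {e\<in>E. e \<subseteq> B}))"
proof -
  let ?V = "insert r S"
  let ?E' = "{e\<in>E. r \<notin> e}"
  define E1 where "E1 = {e\<in>E. e \<subseteq> B}"
  define E0 where "E0 = {e\<in>E. e \<subseteq> insert r (S - B)}"
  have edg: "E \<subseteq> edges ?V" and cardE: "card E + 1 = card ?V"
    and conn: "\<forall>i\<in>?V. \<forall>j\<in>?V. (i, j) \<in> (erel E)\<^sup>*"
    using T by (auto simp: is_tree_iff)
  have fE: "finite E" using tree_finite[OF _ T] S by simp
  have inV: "i \<in> ?V" "j \<in> ?V" "i \<noteq> j" if "{i, j} \<in> E" for i j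
    using edg that by (auto simp: edges_def doubleton_eq_iff)
  have pB: "p \<in> B" by (simp add: B_def)
  have BS: "B \<subseteq> S"
  proof
    fix v assume "v \<in> B"
    then have "(p, v) \<in> (erel ?E')\<^sup>*" by (simp add: B_def)
    then show "v \<in> S"
    proof (induction rule: rtrancl_induct)
      case base then show ?case using p .
    next
      case (step y z)
      then show ?case using inV[of y z] by auto
    qed
  qed
  have rB: "r \<notin> B" using BS S by auto
  have clos: "w \<in> B" if "v \<in> B" "{v, w} \<in> E" "r \<noteq> v" "r \<noteq> w" for v w
  proof -
    have "(p, v) \<in> (erel ?E')\<^sup>*" using that by (simp add: B_def)
    moreover have "(v, w) \<in> erel ?E'" using that by simp
    ultimately show ?thesis unfolding B_def by (simp add: rtrancl_into_rtrancl)
  qed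
  have fB: "finite B" using BS S finite_subset by blast
  have VB: "?V = B \<union> insert r (S - B)" "B \<inter> insert r (S - B) = {}" using BS rB by auto
  have sub_edges: "e \<in> edges W" if eW: "e \<in> E" "e \<subseteq> W" for e W
  proof -
    obtain i j where "e = {i, j}" "i \<noteq> j" using edg eW by (auto elim!: edgesE)
    then show ?thesis using eW by (auto intro!: edgesI)
  qed
  have E1e: "E1 \<subseteq> edges B"
    using sub_edges by (auto simp: E1_def)
  have E0e: "E0 \<subseteq> edges (insert r (S - B))"
    using sub_edges by (auto simp: E0_def)
  have k1: "(v, p) \<in> (erel E1)\<^sup>*" if "v \<in> B" for v
  proof -
    have "(p, v) \<in> (erel ?E')\<^sup>*" using that by (simp add: B_def)
    then have "(p, v) \<in> (erel E1)\<^sup>*"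
    proof (induction rule: rtrancl_induct)
      case base then show ?case by simp
    next
      case (step y z)
      have "y \<in> B" "z \<in> B" using step unfolding B_def by (auto intro: rtrancl_into_rtrancl)
      then have "(y, z) \<in> erel E1" using step by (auto simp: E1_def)
      then show ?case using step by (simp add: rtrancl_into_rtrancl)
    qed
    then show ?thesis by (rule rtr_sym)
  qed
  have k0: "(w, r) \<in> (erel E0)\<^sup>*" if "w \<in> insert r (S - B)" for w
  proof -
    have "(w, r) \<in> (erel E)\<^sup>*" using conn that by auto
    then show ?thesis using that
    proof (induction rule: converse_rtrancl_induct)
      case base then show ?case by simp
    next
      case (step y z)
      show ?case
      proof (cases "y = r")
        case True then show ?thesis by simp
      next
        case False
        with step.prems have y: "y \<in> S" "y \<notin> B" by auto
        have yz: "{y, z} \<in> E" using step by simp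
        have z: "z \<in> ?V" using inV[OF yz] by simp
        have "z \<notin> B"
        proof
          assume zB: "z \<in> B"
          then have "z \<noteq> r" using rB by auto
          then have "y \<in> B" using clos[OF zB] yz False by (simp add: insert_commute)
          then show False using y by simp
        qed
        then have zin: "z \<in> insert r (S - B)" using z by auto
        then have "(y, z) \<in> erel E0" using yz step.prems by (auto simp: E0_def)
        then show ?thesis using step.IH[OF zin] by (rule converse_rtrancl_into_rtrancl)
      qed
    qed
  qed
  define C where "C = {c\<in>B. {r, c} \<in> E}"
  have part: "E = E0 \<union> E1 \<union> (\<lambda>c. {r, c}) ` C"
  proof (intro equalityI subsetI)
    fix e assume e: "e \<in> E"
    then obtain i j where ij: "e = {i, j}" "i \<noteq> j" "i \<in> ?V" "j \<in> ?V"
      using edg by (auto elim!: edgesE)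
    have cross: "j = r" if "i \<in> B" "j \<notin> B" "{i, j} \<in> E" for i j
      using clos[OF that(1,3)] that rB by auto
    show "e \<in> E0 \<union> E1 \<union> (\<lambda>c. {r, c}) ` C"
    proof (cases "i \<in> B"; cases "j \<in> B")
      assume "i \<in> B" "j \<in> B" then show ?thesis using e ij by (auto simp: E1_def)
    next
      assume "i \<in> B" "j \<notin> B"
      then have "j = r" using cross e ij by auto
      then show ?thesis using e ij \<open>i \<in> B\<close> by (auto simp: C_def insert_commute)
    next
      assume "i \<notin> B" "j \<in> B"
      then have "i = r" using cross[of j i] e ij by (auto simp: insert_commute)
      then show ?thesis using e ij \<open>j \<in> B\<close> by (auto simp: C_def)
    next
      assume "i \<notin> B" "j \<notin> B"
      then show ?thesis using e ij by (auto simp: E0_def)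
    qed
  qed (auto simp: E0_def E1_def C_def)
  have ne: "e \<noteq> {}" if "e \<in> E" for e using that edg by (auto simp: edges_def)
  have d01: "E0 \<inter> E1 = {}"
    using ne VB(2) by (auto simp: E0_def E1_def)
  have d2: "(E0 \<union> E1) \<inter> (\<lambda>c. {r, c}) ` C = {}"
    using rB by (auto simp: E0_def E1_def C_def)
  have injC: "inj_on (\<lambda>c. {r, c}) C"
    using rB by (auto simp: inj_on_def C_def doubleton_eq_iff)
  have fC: "finite C" using fB by (simp add: C_def)
  have f0: "finite E0" "finite E1" using fE by (auto simp: E0_def E1_def)
  have cE: "card E = card E0 + card E1 + card C"
    using part d01 d2 f0 fC injC
    by (metis card_Un_disjoint card_image finite_UnI finite_imageI)
  have cV: "card ?V = card B + card (insert r (S - B))"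
    using VB fB S by (metis card_Un_disjoint finite_Diff finite_insert)
  have c1: "card B \<le> card E1 + 1"
    using conn_card[OF fB f0(2) pB] k1 by blast
  have c0: "card (insert r (S - B)) \<le> card E0 + 1"
    using conn_card[of "insert r (S - B)" E0 r] k0 f0 S by blast
  have "(p, r) \<in> (erel E)\<^sup>*" using conn p by auto
  have "\<exists>u w. u \<in> B \<and> w \<notin> B \<and> {u, w} \<in> E"
  proof -
    have "(p, r) \<in> (erel E)\<^sup>*" using conn p by auto
    then have "p \<in> B \<longrightarrow> r \<notin> B \<longrightarrow> (\<exists>u w. u \<in> B \<and> w \<notin> B \<and> {u, w} \<in> E)"
      by (induction rule: rtrancl_induct) auto
    then show ?thesis using pB rB by blast
  qed
  then obtain u w where uw: "u \<in> B" "w \<notin> B" "{u, w} \<in> E" by blast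
  then have "w = r" using clos[OF uw(1,3)] rB by auto
  then have "u \<in> C" using uw by (auto simp: C_def insert_commute)
  then have "card C \<ge> 1" using fC by (metis One_nat_def Suc_leI card_gt_0_iff empty_iff)
  then have cC: "card C = 1" and eq1: "card E1 + 1 = card B" and eq0: "card E0 + 1 = card (insert r (S - B))"
    using cE cV c1 c0 cardE by linarith+
  from cC obtain c where Cc: "C = {c}" by (metis card_1_singletonE)
  then have cB: "c \<in> B" by (auto simp: C_def)
  have t1: "is_tree B E1"
    unfolding is_tree_iff using E1e eq1 conn_via_root[of B p E1] k1 by blast
  have t0: "is_tree (insert r (S - B)) E0"
    unfolding is_tree_iff using E0e eq0 conn_via_root[of "insert r (S - B)" r E0] k0 by blast
  have "E = insert {r, c} (E0 \<union> E1)" using part Cc by auto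
  then show ?thesis using BS pB cB t1 t0 unfolding E0_def E1_def by blast
qed


definition glue :: "nat \<Rightarrow> nat set \<times> nat \<times> nat set set \<times> nat set set \<Rightarrow> nat set set" where
  "glue r = (\<lambda>(B, c, E1, E0). insert {r, c} (E0 \<union> E1))"

definition Dset :: "nat set \<Rightarrow> nat \<Rightarrow> nat \<Rightarrow> (nat set \<times> nat \<times> nat set set \<times> nat set set) set" where
  "Dset S r p = (SIGMA B:{B. p \<in> B \<and> B \<subseteq> S}. SIGMA c:B. {E1. is_tree B E1} \<times> {E0. is_tree (insert r (S - B)) E0})"

lemma glue_recover:
  assumes S: "finite S" "r \<notin> S" and B: "B \<subseteq> S" "p \<in> B" "c \<in> B"
    and E1: "is_tree B E1" and E0: "is_tree (insert r (S - B)) E0"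
    and E: "E = insert {r, c} (E0 \<union> E1)"
  shows "{v. (p, v) \<in> (erel {e\<in>E. r \<notin> e})\<^sup>*} = B"
    and "{e\<in>E. e \<subseteq> B} = E1"
    and "{e\<in>E. e \<subseteq> insert r (S - B)} = E0"
    and "\<And>c'. c' \<in> B \<Longrightarrow> {r, c'} \<in> E \<Longrightarrow> c' = c"
proof -
  have e1: "E1 \<subseteq> edges B" and k1: "\<forall>i\<in>B. \<forall>j\<in>B. (i, j) \<in> (erel E1)\<^sup>*"
    using E1 by (auto simp: is_tree_iff)
  have e0: "E0 \<subseteq> edges (insert r (S - B))"
    using E0 by (auto simp: is_tree_iff)
  have rB: "r \<notin> B" using B S by auto
  have e1s: "e \<subseteq> B" "e \<noteq> {}" if "e \<in> E1" for e
    using that e1 by (auto simp: edges_def)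
  have e0s: "e \<subseteq> insert r (S - B)" "\<exists>x\<in>e. x \<noteq> r" if "e \<in> E0" for e
    using that e0 by (auto simp: edges_def)
  show "{v. (p, v) \<in> (erel {e\<in>E. r \<notin> e})\<^sup>*} = B"
  proof (intro equalityI subsetI)
    fix v assume "v \<in> {v. (p, v) \<in> (erel {e\<in>E. r \<notin> e})\<^sup>*}"
    then have "(p, v) \<in> (erel {e\<in>E. r \<notin> e})\<^sup>*" by simp
    then show "v \<in> B"
    proof (induction rule: rtrancl_induct)
      case base then show ?case using B by simp
    next
      case (step y z)
      then have yz: "{y, z} \<in> E" "r \<noteq> y" "r \<noteq> z" by auto
      have "{y, z} \<notin> E0"
      proof
        assume "{y, z} \<in> E0"
        then have "y \<in> insert r (S - B)" using e0s by auto
        then show False using step yz by auto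
      qed
      moreover have "{y, z} \<noteq> {r, c}" using yz by (auto simp: doubleton_eq_iff)
      ultimately have "{y, z} \<in> E1" using yz E by auto
      then show ?case using e1s by auto
    qed
  next
    fix v assume "v \<in> B"
    then have "(p, v) \<in> (erel E1)\<^sup>*" using k1 B by auto
    moreover have "E1 \<subseteq> {e\<in>E. r \<notin> e}" using E e1s rB by auto
    ultimately show "v \<in> {v. (p, v) \<in> (erel {e\<in>E. r \<notin> e})\<^sup>*}" by (auto intro: erel_mono)
  qed
  have d0: "\<not> e \<subseteq> B" if "e \<in> E0" for e using e0s[OF that] by blast
  show "{e\<in>E. e \<subseteq> B} = E1"
    using E e1s d0 rB B by auto
  have d1: "\<not> e \<subseteq> insert r (S - B)" if "e \<in> E1" for e using e1s[OF that] rB by blast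
  show "{e\<in>E. e \<subseteq> insert r (S - B)} = E0"
    using E d1 e0s rB B by auto
  show "c' = c" if "c' \<in> B" "{r, c'} \<in> E" for c'
  proof -
    have "{r, c'} \<notin> E1" using e1s rB by auto
    moreover have "{r, c'} \<notin> E0" using e0s that by auto
    ultimately show ?thesis using that E by (auto simp: doubleton_eq_iff)
  qed
qed

lemma glue_bij:
  assumes S: "finite S" "r \<notin> S" and p: "p \<in> S"
  shows "bij_betw (glue r) (Dset S r p) {E. is_tree (insert r S) E}"
proof (rule bij_betwI')
  fix d d' assume d: "d \<in> Dset S r p" and d': "d' \<in> Dset S r p"
  obtain B c E1 E0 where dd: "d = (B, c, E1, E0)" by (cases d) auto
  obtain B' c' E1' E0' where dd': "d' = (B', c', E1', E0')" by (cases d') auto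
  note R = glue_recover[OF S, of B p c E1 E0 "glue r d"]
  note R' = glue_recover[OF S, of B' p c' E1' E0' "glue r d'"]
  have h: "B \<subseteq> S" "p \<in> B" "c \<in> B" "is_tree B E1" "is_tree (insert r (S - B)) E0"
    using d dd by (auto simp: Dset_def)
  have h': "B' \<subseteq> S" "p \<in> B'" "c' \<in> B'" "is_tree B' E1'" "is_tree (insert r (S - B')) E0'"
    using d' dd' by (auto simp: Dset_def)
  show "(glue r d = glue r d') = (d = d')"
  proof
    assume eq: "glue r d = glue r d'"
    have g: "glue r d = insert {r, c} (E0 \<union> E1)" "glue r d' = insert {r, c'} (E0' \<union> E1')"
      by (auto simp: glue_def dd dd')
    have BB: "B = B'" using R(1)[OF h g(1)] R'(1)[OF h' g(2)] eq by simp
    have "E1 = E1'" using R(2)[OF h g(1)] R'(2)[OF h' g(2)] eq BB by simp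
    moreover have "E0 = E0'" using R(3)[OF h g(1)] R'(3)[OF h' g(2)] eq BB by simp
    moreover have "c = c'"
      using R(4)[OF h g(1), of c'] h' eq g BB by auto
    ultimately show "d = d'" using dd dd' BB by simp
  qed simp
next
  fix d assume d: "d \<in> Dset S r p"
  obtain B c E1 E0 where dd: "d = (B, c, E1, E0)" by (cases d) auto
  then show "glue r d \<in> {E. is_tree (insert r S) E}"
    using d glue_tree[OF S] by (auto simp: Dset_def glue_def)
next
  fix E assume "E \<in> {E. is_tree (insert r S) E}"
  then have T: "is_tree (insert r S) E" by simp
  define B where "B = {v. (p, v) \<in> (erel {e\<in>E. r \<notin> e})\<^sup>*}"
  from tree_split[OF T S p] obtain c where
    c: "B \<subseteq> S" "p \<in> B" "c \<in> B" "is_tree B {e\<in>E. e \<subseteq> B}"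
       "is_tree (insert r (S - B)) {e\<in>E. e \<subseteq> insert r (S - B)}"
       "E = insert {r, c} ({e\<in>E. e \<subseteq> insert r (S - B)} \<union> {e\<in>E. e \<subseteq> B})"
    unfolding B_def by blast
  show "\<exists>d\<in>Dset S r p. E = glue r d"
    by (rule bexI[of _ "(B, c, {e\<in>E. e \<subseteq> B}, {e\<in>E. e \<subseteq> insert r (S - B)})"])
       (use c in \<open>auto simp: Dset_def glue_def\<close>)
qed


lemma tree_image:
  assumes inj: "inj_on \<pi> V" and T: "is_tree V E"
  shows "is_tree (\<pi> ` V) ((`) \<pi> ` E)"
proof -
  have e: "E \<subseteq> edges V" and c: "card E + 1 = card V" and k: "\<forall>i\<in>V. \<forall>j\<in>V. (i, j) \<in> (erel E)\<^sup>*"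
    using T by (auto simp: is_tree_iff)
  have "(`) \<pi> ` E \<subseteq> edges (\<pi> ` V)"
  proof
    fix e' assume "e' \<in> (`) \<pi> ` E"
    then obtain e where "e \<in> E" "e' = \<pi> ` e" by blast
    then obtain i j where "e = {i, j}" "i \<noteq> j" "i \<in> V" "j \<in> V" using e by (auto elim!: edgesE)
    then show "e' \<in> edges (\<pi> ` V)" using \<open>e' = \<pi> ` e\<close> inj
      by (auto intro!: edgesI dest: inj_onD)
  qed
  moreover have "inj_on ((`) \<pi>) E"
  proof (rule inj_onI)
    fix a b assume "a \<in> E" "b \<in> E" "\<pi> ` a = \<pi> ` b"
    moreover have "a \<subseteq> V" "b \<subseteq> V" using \<open>a \<in> E\<close> \<open>b \<in> E\<close> e edges_sub by auto
    ultimately show "a = b" using inj_on_image_eq_iff[OF inj] by blast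
  qed
  then have "card ((`) \<pi> ` E) + 1 = card (\<pi> ` V)"
    using c card_image[OF inj] card_image by metis
  moreover have "(\<pi> i, \<pi> j) \<in> (erel ((`) \<pi> ` E))\<^sup>*" if "(i, j) \<in> (erel E)\<^sup>*" for i j
    using that
  proof (induction rule: rtrancl_induct)
    case base then show ?case by simp
  next
    case (step y z)
    then have "{\<pi> y, \<pi> z} \<in> (`) \<pi> ` E" by (metis erel_iff image_empty image_eqI image_insert)
    then show ?case using step by (simp add: rtrancl_into_rtrancl)
  qed
  then have "\<forall>i\<in>\<pi> ` V. \<forall>j\<in>\<pi> ` V. (i, j) \<in> (erel ((`) \<pi> ` E))\<^sup>*" using k by blast
  ultimately show ?thesis by (simp add: is_tree_iff)
qed

lemma trees_bij:
  assumes inj: "inj_on \<pi> V"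
  shows "bij_betw (\<lambda>E. (`) \<pi> ` E) {E. is_tree V E} {E. is_tree (\<pi> ` V) E}"
proof (rule bij_betw_imageI)
  have injP: "inj_on ((`) \<pi>) (Pow V)"
    using inj_on_image_eq_iff[OF inj] by (auto simp: inj_on_def)
  show "inj_on (\<lambda>E. (`) \<pi> ` E) {E. is_tree V E}"
  proof (rule inj_onI)
    fix a b assume "a \<in> {E. is_tree V E}" "b \<in> {E. is_tree V E}" and eq: "(`) \<pi> ` a = (`) \<pi> ` b"
    then have "a \<subseteq> edges V" "b \<subseteq> edges V" by (auto simp: is_tree_iff)
    then have "a \<subseteq> Pow V" "b \<subseteq> Pow V" using edges_sub by blast+
    then show "a = b" using inj_on_image_eq_iff[OF injP] eq by blast
  qed
next
  show "(\<lambda>E. (`) \<pi> ` E) ` {E. is_tree V E} = {E. is_tree (\<pi> ` V) E}"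
  proof (intro equalityI subsetI)
    fix E' assume "E' \<in> (\<lambda>E. (`) \<pi> ` E) ` {E. is_tree V E}"
    then show "E' \<in> {E. is_tree (\<pi> ` V) E}" using tree_image[OF inj] by auto
  next
    fix E' assume "E' \<in> {E. is_tree (\<pi> ` V) E}"
    then have T: "is_tree (\<pi> ` V) E'" by simp
    let ?\<sigma> = "inv_into V \<pi>"
    have inj': "inj_on ?\<sigma> (\<pi> ` V)" by (rule inj_on_inv_into) simp
    have "?\<sigma> ` \<pi> ` V = V" using inj by simp
    then have T': "is_tree V ((`) ?\<sigma> ` E')" using tree_image[OF inj' T] by simp
    have sub: "e \<subseteq> \<pi> ` V" if "e \<in> E'" for e using T that edges_sub by (auto simp: is_tree_iff)
    have "\<pi> ` ?\<sigma> ` e = e" if "e \<in> E'" for e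
      using sub[OF that] by (auto simp: image_image f_inv_into_f) (metis f_inv_into_f image_eqI subsetD)
    then have "(`) \<pi> ` (`) ?\<sigma> ` E' = E'" by (simp add: image_image)
    then show "E' \<in> (\<lambda>E. (`) \<pi> ` E) ` {E. is_tree V E}" using T' by blast
  qed
qed


lemma glue_disj:
  assumes S: "finite S" "r \<notin> S" and B: "B \<subseteq> S" "c \<in> B"
    and E1: "is_tree B E1" and E0: "is_tree (insert r (S - B)) E0"
  shows "E0 \<inter> E1 = {}" "{r, c} \<notin> E0 \<union> E1" "finite E0" "finite E1"
proof -
  have fB: "finite B" using B S finite_subset by blast
  show f1: "finite E1" using tree_finite[OF fB E1] .
  show f0: "finite E0" using tree_finite[OF _ E0] S by simp
  have e1: "E1 \<subseteq> edges B" using E1 by (auto simp: is_tree_iff)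
  have e0: "E0 \<subseteq> edges (insert r (S - B))" using E0 by (auto simp: is_tree_iff)
  have rB: "r \<notin> B" using B S by auto
  { fix e assume "e \<in> E0" "e \<in> E1"
    then have "e \<subseteq> insert r (S - B)" "e \<subseteq> B" "e \<noteq> {}"
      using e0 e1 edges_sub by (auto simp: edges_def)
    then have False using rB by blast }
  then show "E0 \<inter> E1 = {}" by blast
  show "{r, c} \<notin> E0 \<union> E1"
    using e0 e1 edges_sub rB B by (fastforce simp: edges_def doubleton_eq_iff)
qed



unbundle no fps_syntax

locale mayer_setup =
  fixes lam :: "'a::polish_space measure" and v :: "'a \<Rightarrow> 'a \<Rightarrow> ennreal" and z :: "'a \<Rightarrow> real"
  assumes sets_lam: "sets lam = sets borel"
    and sf_lam: "sigma_finite_measure lam"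
    and v_meas: "(\<lambda>p. v (fst p) (snd p)) \<in> borel_measurable (borel \<Otimes>\<^sub>M borel)"
    and v_sym: "\<And>x y. v x y = v y x"
    and z_meas: "z \<in> borel_measurable borel"
    and z_nonneg: "\<And>x. z x \<ge> 0"
begin

abbreviation "N \<equiv> lam_z lam z"

lemma sets_N[measurable_cong]: "sets N = sets borel"
  by (simp add: lam_z_def sets_lam)

lemma space_N: "space N = UNIV"
  using sets_eq_imp_space_eq[OF sets_N] by simp

lemma sf_N: "sigma_finite_measure N"
proof -
  interpret sigma_finite_measure lam by (rule sf_lam)
  have zm: "(\<lambda>x. ennreal (z x)) \<in> borel_measurable lam"
    using z_meas by (simp add: measurable_cong_sets[OF sets_lam refl])
  show ?thesis unfolding lam_z_def
    using sigma_finite_iff_density_finite[OF zm] by simp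
qed

interpretation P: product_sigma_finite "\<lambda>_. N"
  by (simp add: product_sigma_finite_def sf_N)

lemma mayer_sym: "mayer_abs v x y = mayer_abs v y x"
  by (simp add: mayer_abs_def v_sym)

lemma mayer_meas: "(\<lambda>p. mayer_abs v (fst p) (snd p)) \<in> borel_measurable (borel \<Otimes>\<^sub>M borel)"
  unfolding mayer_abs_def using v_meas by measurable

lemma mayer_meas':
  assumes "g \<in> measurable K borel" "h \<in> measurable K borel"
  shows "(\<lambda>\<omega>. mayer_abs v (g \<omega>) (h \<omega>)) \<in> borel_measurable K"
  using measurable_compose[OF measurable_Pair[OF assms] mayer_meas] by simp

definition Mf :: "(nat \<Rightarrow> 'a) \<Rightarrow> nat set \<Rightarrow> ennreal" where
  "Mf y e = mayer_abs v (y (Min e)) (y (Max e))"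

definition TW :: "nat set \<Rightarrow> nat \<Rightarrow> (nat \<Rightarrow> 'a) \<Rightarrow> ennreal" where
  "TW S r y = (\<Sum>E\<in>{E. is_tree (insert r S) E}. \<Prod>e\<in>E. Mf y e)"

definition W :: "nat \<Rightarrow> nat set \<Rightarrow> 'a \<Rightarrow> ennreal" where
  "W r S q = (\<integral>\<^sup>+ x. TW S r (x(r := q)) \<partial>PiM S (\<lambda>_. N))"

lemma Mf_pair: "Mf y {i, j} = mayer_abs v (y i) (y j)"
  by (cases "i \<le> j") (auto simp: Mf_def max_def min_def mayer_sym)

lemma tree_edge_pair:
  assumes "is_tree V E" "e \<in> E"
  obtains i j where "e = {i, j}" "i \<in> V" "j \<in> V"
  using assms by (auto simp: is_tree_iff elim!: edgesE)

lemma TW_cong: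
  assumes "\<And>i. i \<in> insert r S \<Longrightarrow> y i = y' i"
  shows "TW S r y = TW S r y'"
  unfolding TW_def
proof (intro sum.cong refl prod.cong)
  fix E e assume "E \<in> {E. is_tree (insert r S) E}" "e \<in> E"
  then obtain i j where "e = {i, j}" "i \<in> insert r S" "j \<in> insert r S"
    by (auto elim: tree_edge_pair)
  then show "Mf y e = Mf y' e" using assms by (simp add: Mf_pair)
qed

lemma TW_meas:
  assumes S: "finite S" and h: "\<And>i. i \<in> insert r S \<Longrightarrow> (\<lambda>\<omega>. h \<omega> i) \<in> measurable K borel"
  shows "(\<lambda>\<omega>. TW S r (h \<omega>)) \<in> borel_measurable K"
  unfolding TW_def
proof (intro borel_measurable_sum borel_measurable_prod_ennreal)
  fix E e assume "E \<in> {E. is_tree (insert r S) E}" "e \<in> E"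
  then obtain i j where "e = {i, j}" "i \<in> insert r S" "j \<in> insert r S"
    by (auto elim: tree_edge_pair)
  then show "(\<lambda>\<omega>. Mf (h \<omega>) e) \<in> borel_measurable K"
    by (simp add: Mf_pair mayer_meas' h)
qed

lemma TW_split:
  assumes S: "finite S" "r \<notin> S" and p: "p \<in> S"
  shows "TW S r y = (\<Sum>B\<in>{B. p \<in> B \<and> B \<subseteq> S}. \<Sum>c\<in>B.
            mayer_abs v (y r) (y c) * TW (B - {c}) c y * TW (S - B) r y)"
proof -
  let ?P = "\<lambda>E. \<Prod>e\<in>E. Mf y e"
  have fin: "finite {B. p \<in> B \<and> B \<subseteq> S}" using S by simp
  have finB: "finite B" if "B \<in> {B. p \<in> B \<and> B \<subseteq> S}" for B using that S finite_subset by blast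
  have "TW S r y = (\<Sum>d\<in>Dset S r p. ?P (glue r d))"
    unfolding TW_def by (rule sum.reindex_bij_betw[OF glue_bij[OF S p], symmetric])
  also have "\<dots> = (\<Sum>B\<in>{B. p \<in> B \<and> B \<subseteq> S}. \<Sum>c\<in>B. \<Sum>E1\<in>{E1. is_tree B E1}. \<Sum>E0\<in>{E0. is_tree (insert r (S - B)) E0}.
                     ?P (insert {r, c} (E0 \<union> E1)))"
  proof -
    let ?T = "\<lambda>B. B \<times> {E1. is_tree B E1} \<times> {E0. is_tree (insert r (S - B)) E0}"
    let ?F = "\<lambda>d. ?P (glue r d)"
    have fin2: "\<forall>B\<in>{B. p \<in> B \<and> B \<subseteq> S}. finite (?T B)"
      using finB S by (auto intro!: finite_trees_set)
    have "(\<Sum>d\<in>Dset S r p. ?F d) = (\<Sum>B\<in>{B. p \<in> B \<and> B \<subseteq> S}. \<Sum>t\<in>?T B. ?F (B, t))"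
      unfolding Dset_def using sum.Sigma[OF fin fin2, of "\<lambda>B t. ?F (B, t)"] by simp
    also have "\<dots> = (\<Sum>B\<in>{B. p \<in> B \<and> B \<subseteq> S}. \<Sum>c\<in>B. \<Sum>E1\<in>{E1. is_tree B E1}. \<Sum>E0\<in>{E0. is_tree (insert r (S - B)) E0}.
                     ?P (insert {r, c} (E0 \<union> E1)))"
      by (intro sum.cong refl) (simp add: sum.cartesian_product glue_def case_prod_unfold)
    finally show ?thesis .
  qed
  also have "\<dots> = (\<Sum>B\<in>{B. p \<in> B \<and> B \<subseteq> S}. \<Sum>c\<in>B. \<Sum>E1\<in>{E1. is_tree B E1}. \<Sum>E0\<in>{E0. is_tree (insert r (S - B)) E0}.
                     mayer_abs v (y r) (y c) * ?P E1 * ?P E0)"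
  proof (intro sum.cong refl)
    fix B c E1 E0
    assume B: "B \<in> {B. p \<in> B \<and> B \<subseteq> S}" and c: "c \<in> B" and E1: "E1 \<in> {E1. is_tree B E1}"
      and E0: "E0 \<in> {E0. is_tree (insert r (S - B)) E0}"
    note D = glue_disj[OF S, of B c E1 E0]
    have D': "E0 \<inter> E1 = {}" "{r, c} \<notin> E0 \<union> E1" "finite E0" "finite E1" using D B c E1 E0 by auto
    show "?P (insert {r, c} (E0 \<union> E1)) = mayer_abs v (y r) (y c) * ?P E1 * ?P E0"
      using D' by (simp add: prod.union_disjoint Mf_pair mult_ac)
  qed
  also have "\<dots> = (\<Sum>B\<in>{B. p \<in> B \<and> B \<subseteq> S}. \<Sum>c\<in>B.
            mayer_abs v (y r) (y c) * TW (B - {c}) c y * TW (S - B) r y)"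
  proof (intro sum.cong refl)
    fix B c assume B: "B \<in> {B. p \<in> B \<and> B \<subseteq> S}" and c: "c \<in> B"
    have "insert c (B - {c}) = B" using c by auto
    then show "(\<Sum>E1\<in>{E1. is_tree B E1}. \<Sum>E0\<in>{E0. is_tree (insert r (S - B)) E0}.
                     mayer_abs v (y r) (y c) * ?P E1 * ?P E0) =
           mayer_abs v (y r) (y c) * TW (B - {c}) c y * TW (S - B) r y"
      by (simp add: TW_def sum_distrib_left sum_distrib_right mult_ac)
  qed
  finally show ?thesis .
qed


lemma comp_meas: "i \<in> S \<Longrightarrow> (\<lambda>x. x i) \<in> measurable (PiM S (\<lambda>_. N)) borel"
  using measurable_component_singleton[of i S "\<lambda>_. N"]
  by (simp add: measurable_cong_sets[OF refl sets_N])

lemma comp_upd_meas: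
  "i \<in> insert r S \<Longrightarrow> (\<lambda>x. (x(r := q)) i) \<in> measurable (PiM S (\<lambda>_. N)) borel"
  by (cases "i = r") (auto intro: comp_meas)

lemma TW_upd_meas:
  "finite S \<Longrightarrow> (\<lambda>x. TW S r (x(r := q))) \<in> borel_measurable (PiM S (\<lambda>_. N))"
  by (rule TW_meas) (auto intro: comp_upd_meas)

lemma TW_plain_meas:
  "finite B \<Longrightarrow> c \<in> B \<Longrightarrow> (\<lambda>x. TW (B - {c}) c x) \<in> borel_measurable (PiM B (\<lambda>_. N))"
  by (rule TW_meas) (auto intro: comp_meas)

lemma W_term:
  assumes S: "finite S" "r \<notin> S" and B: "B \<subseteq> S" "c \<in> B"
  shows "(\<integral>\<^sup>+ x. mayer_abs v q (x c) * TW (B - {c}) c x * TW (S - B) r (x(r := q)) \<partial>PiM S (\<lambda>_. N))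
         = (\<integral>\<^sup>+ y. mayer_abs v q y * W c (B - {c}) y \<partial>N) * W r (S - B) q"
proof -
  have fB: "finite B" using B S finite_subset by blast
  have SB: "S = B \<union> (S - B)" using B by auto
  have fSB: "finite (S - B)" using S by simp
  let ?A = "\<lambda>x. mayer_abs v q (x c) * TW (B - {c}) c x"
  let ?G = "\<lambda>y. TW (S - B) r (y(r := q))"
  have Am: "?A \<in> borel_measurable (PiM B (\<lambda>_. N))"
    using B fB by (intro borel_measurable_times_ennreal mayer_meas' measurable_const TW_plain_meas comp_meas) auto
  have Gm: "?G \<in> borel_measurable (PiM (S - B) (\<lambda>_. N))"
    by (rule TW_upd_meas[OF fSB])
  have fm: "(\<lambda>x. ?A x * TW (S - B) r (x(r := q))) \<in> borel_measurable (PiM (B \<union> (S - B)) (\<lambda>_. N))"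
    using B S SB[symmetric] by (intro borel_measurable_times_ennreal mayer_meas' measurable_const TW_meas comp_meas comp_upd_meas) (auto intro: finite_subset)
  have "(\<integral>\<^sup>+ x. ?A x * TW (S - B) r (x(r := q)) \<partial>PiM S (\<lambda>_. N))
        = (\<integral>\<^sup>+ x. ?A x * TW (S - B) r (x(r := q)) \<partial>PiM (B \<union> (S - B)) (\<lambda>_. N))"
    using SB by simp
  also have "\<dots> = (\<integral>\<^sup>+ x. \<integral>\<^sup>+ y. ?A (merge B (S - B) (x, y)) * TW (S - B) r ((merge B (S - B) (x, y))(r := q))
                      \<partial>PiM (S - B) (\<lambda>_. N) \<partial>PiM B (\<lambda>_. N))"
    by (rule P.product_nn_integral_fold[OF _ fB fSB fm]) auto
  also have "\<dots> = (\<integral>\<^sup>+ x. \<integral>\<^sup>+ y. ?A x * ?G y \<partial>PiM (S - B) (\<lambda>_. N) \<partial>PiM B (\<lambda>_. N))"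
  proof (intro nn_integral_cong)
    fix x y
    have "?A (merge B (S - B) (x, y)) = ?A x"
      using B by (intro arg_cong2[where f="(*)"] TW_cong) (auto simp: merge_def)
    moreover have "TW (S - B) r ((merge B (S - B) (x, y))(r := q)) = ?G y"
      using B S by (intro TW_cong) (auto simp: merge_def)
    ultimately show "?A (merge B (S - B) (x, y)) * TW (S - B) r ((merge B (S - B) (x, y))(r := q)) = ?A x * ?G y"
      by simp
  qed
  also have "\<dots> = (\<integral>\<^sup>+ x. ?A x * W r (S - B) q \<partial>PiM B (\<lambda>_. N))"
    by (intro nn_integral_cong) (simp add: nn_integral_cmult[OF Gm] W_def)
  also have "\<dots> = (\<integral>\<^sup>+ x. ?A x \<partial>PiM B (\<lambda>_. N)) * W r (S - B) q"
    by (rule nn_integral_multc[OF Am])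
  also have "(\<integral>\<^sup>+ x. ?A x \<partial>PiM B (\<lambda>_. N)) = (\<integral>\<^sup>+ y. mayer_abs v q y * W c (B - {c}) y \<partial>N)"
  proof -
    have iB: "insert c (B - {c}) = B" using B by auto
    have Am': "?A \<in> borel_measurable (PiM (insert c (B - {c})) (\<lambda>_. N))" using Am iB by simp
    have "(\<integral>\<^sup>+ x. ?A x \<partial>PiM B (\<lambda>_. N)) = (\<integral>\<^sup>+ x. ?A x \<partial>PiM (insert c (B - {c})) (\<lambda>_. N))"
      using iB by simp
    also have "\<dots> = (\<integral>\<^sup>+ y. \<integral>\<^sup>+ x. ?A (x(c := y)) \<partial>PiM (B - {c}) (\<lambda>_. N) \<partial>N)"
      by (rule P.product_nn_integral_insert_rev) (use fB Am' in auto)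
    also have "\<dots> = (\<integral>\<^sup>+ y. mayer_abs v q y * W c (B - {c}) y \<partial>N)"
    proof (intro nn_integral_cong)
      fix y
      have m: "(\<lambda>x. TW (B - {c}) c (x(c := y))) \<in> borel_measurable (PiM (B - {c}) (\<lambda>_. N))"
        using fB by (intro TW_upd_meas) auto
      show "(\<integral>\<^sup>+ x. ?A (x(c := y)) \<partial>PiM (B - {c}) (\<lambda>_. N)) = mayer_abs v q y * W c (B - {c}) y"
        by (simp add: W_def nn_integral_cmult[OF m])
    qed
    finally show ?thesis .
  qed
  finally show ?thesis .
qed

lemma W_decomp:
  assumes S: "finite S" "r \<notin> S" and p: "p \<in> S"
  shows "W r S q = (\<Sum>B\<in>{B. p \<in> B \<and> B \<subseteq> S}. \<Sum>c\<in>B.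
            (\<integral>\<^sup>+ y. mayer_abs v q y * W c (B - {c}) y \<partial>N) * W r (S - B) q)"
proof -
  let ?F = "\<lambda>B c x. mayer_abs v q (x c) * TW (B - {c}) c x * TW (S - B) r (x(r := q))"
  have Fm: "?F B c \<in> borel_measurable (PiM S (\<lambda>_. N))" if "B \<subseteq> S" "c \<in> B" for B c
    using that S by (intro borel_measurable_times_ennreal mayer_meas' measurable_const TW_meas comp_meas comp_upd_meas) (auto intro: finite_subset)
  have "W r S q = (\<integral>\<^sup>+ x. (\<Sum>B\<in>{B. p \<in> B \<and> B \<subseteq> S}. \<Sum>c\<in>B. ?F B c x) \<partial>PiM S (\<lambda>_. N))"
    unfolding W_def
  proof (intro nn_integral_cong)
    fix x assume x: "x \<in> space (PiM S (\<lambda>_. N))"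
    show "TW S r (x(r := q)) = (\<Sum>B\<in>{B. p \<in> B \<and> B \<subseteq> S}. \<Sum>c\<in>B. ?F B c x)"
      unfolding TW_split[OF S p]
    proof (intro sum.cong refl)
      fix B c assume B: "B \<in> {B. p \<in> B \<and> B \<subseteq> S}" and c: "c \<in> B"
      have "c \<noteq> r" using B c S by auto
      moreover have "TW (B - {c}) c (x(r := q)) = TW (B - {c}) c x"
        using B c S by (intro TW_cong) auto
      ultimately show "mayer_abs v ((x(r := q)) r) ((x(r := q)) c) * TW (B - {c}) c (x(r := q)) * TW (S - B) r (x(r := q))
                      = ?F B c x" by simp
    qed
  qed
  also have "\<dots> = (\<Sum>B\<in>{B. p \<in> B \<and> B \<subseteq> S}. \<Sum>c\<in>B. \<integral>\<^sup>+ x. ?F B c x \<partial>PiM S (\<lambda>_. N))"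
  proof (subst nn_integral_sum)
    show "\<And>B. B \<in> {B. p \<in> B \<and> B \<subseteq> S} \<Longrightarrow> (\<lambda>x. \<Sum>c\<in>B. ?F B c x) \<in> borel_measurable (PiM S (\<lambda>_. N))"
      using Fm by (auto intro!: borel_measurable_sum)
  next
    show "(\<Sum>B\<in>{B. p \<in> B \<and> B \<subseteq> S}. \<integral>\<^sup>+ x. (\<Sum>c\<in>B. ?F B c x) \<partial>PiM S (\<lambda>_. N)) =
          (\<Sum>B\<in>{B. p \<in> B \<and> B \<subseteq> S}. \<Sum>c\<in>B. \<integral>\<^sup>+ x. ?F B c x \<partial>PiM S (\<lambda>_. N))"
      using Fm by (intro sum.cong refl nn_integral_sum) auto
  qed
  also have "\<dots> = (\<Sum>B\<in>{B. p \<in> B \<and> B \<subseteq> S}. \<Sum>c\<in>B.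
            (\<integral>\<^sup>+ y. mayer_abs v q y * W c (B - {c}) y \<partial>N) * W r (S - B) q)"
    using W_term[OF S] by (intro sum.cong refl) auto
  finally show ?thesis .
qed


lemma TW_relabel:
  assumes inj: "inj_on \<rho> (insert r S)"
  shows "TW (\<rho> ` insert r S - {\<rho> r}) (\<rho> r) y = TW S r (y \<circ> \<rho>)"
proof -
  have V: "insert (\<rho> r) (\<rho> ` insert r S - {\<rho> r}) = \<rho> ` insert r S" by auto
  have "TW (\<rho> ` insert r S - {\<rho> r}) (\<rho> r) y = (\<Sum>E'\<in>{E. is_tree (\<rho> ` insert r S) E}. \<Prod>e\<in>E'. Mf y e)"
    unfolding TW_def V ..
  also have "\<dots> = (\<Sum>E\<in>{E. is_tree (insert r S) E}. \<Prod>e\<in>(`) \<rho> ` E. Mf y e)"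
    by (rule sum.reindex_bij_betw[OF trees_bij[OF inj], symmetric])
  also have "\<dots> = (\<Sum>E\<in>{E. is_tree (insert r S) E}. \<Prod>e\<in>E. Mf (y \<circ> \<rho>) e)"
  proof (intro sum.cong refl)
    fix E assume E: "E \<in> {E. is_tree (insert r S) E}"
    have sub: "e \<subseteq> insert r S" if "e \<in> E" for e
      using E that edges_sub by (auto simp: is_tree_iff)
    have "inj_on ((`) \<rho>) E"
      using inj_on_image_eq_iff[OF inj] sub by (auto simp: inj_on_def)
    then have "(\<Prod>e\<in>(`) \<rho> ` E. Mf y e) = (\<Prod>e\<in>E. Mf y (\<rho> ` e))"
      by (rule prod.reindex[THEN trans]) simp
    also have "\<dots> = (\<Prod>e\<in>E. Mf (y \<circ> \<rho>) e)"
    proof (intro prod.cong refl)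
      fix e assume "e \<in> E"
      then obtain i j where "e = {i, j}" using E by (auto elim: tree_edge_pair)
      then show "Mf y (\<rho> ` e) = Mf (y \<circ> \<rho>) e" by (simp add: Mf_pair)
    qed
    finally show "(\<Prod>e\<in>(`) \<rho> ` E. Mf y e) = (\<Prod>e\<in>E. Mf (y \<circ> \<rho>) e)" .
  qed
  finally show ?thesis unfolding TW_def .
qed

lemma distr_reindex:
  assumes S: "finite S" and bij: "bij_betw \<pi> S S'"
  shows "distr (PiM S (\<lambda>_. N)) (PiM S' (\<lambda>_. N)) (\<lambda>x. \<lambda>i\<in>S'. x (inv_into S \<pi> i)) = PiM S' (\<lambda>_. N)"
proof -
  let ?\<sigma> = "inv_into S \<pi>"
  let ?\<phi> = "\<lambda>x. \<lambda>i\<in>S'. x (?\<sigma> i)"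
  have S': "finite S'" using bij S bij_betw_finite by blast
  have \<sigma>S: "?\<sigma> i \<in> S" if "i \<in> S'" for i
    using bij that by (metis bij_betw_def inv_into_into)
  have \<phi>m: "?\<phi> \<in> measurable (PiM S (\<lambda>_. N)) (PiM S' (\<lambda>_. N))"
    by (rule measurable_restrict) (use \<sigma>S in \<open>auto intro: measurable_component_singleton\<close>)
  show ?thesis
  proof (rule P.PiM_eqI[OF S'])
    fix A assume A: "\<And>i. i \<in> S' \<Longrightarrow> A i \<in> sets N"
    have pre: "?\<phi> -` PiE S' A \<inter> space (PiM S (\<lambda>_. N)) = PiE S (\<lambda>i. A (\<pi> i))"
    proof (intro equalityI subsetI)
      fix x assume x: "x \<in> ?\<phi> -` PiE S' A \<inter> space (PiM S (\<lambda>_. N))"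
      show "x \<in> PiE S (\<lambda>i. A (\<pi> i))"
      proof (rule PiE_I)
        fix i assume i: "i \<in> S"
        then have "\<pi> i \<in> S'" using bij bij_betwE by blast
        then have "x (?\<sigma> (\<pi> i)) \<in> A (\<pi> i)" using x by (auto simp: PiE_iff)
        then show "x i \<in> A (\<pi> i)" using i bij by (simp add: bij_betw_def)
      next
        fix i assume "i \<notin> S" then show "x i = undefined" using x by (auto simp: space_PiM PiE_iff extensional_def)
      qed
    next
      fix x assume x: "x \<in> PiE S (\<lambda>i. A (\<pi> i))"
      have "x \<in> space (PiM S (\<lambda>_. N))" using x by (auto simp: space_PiM space_N PiE_iff)
      moreover have "?\<phi> x \<in> PiE S' A"
      proof (rule PiE_I)
        fix i assume i: "i \<in> S'"
        then have "\<pi> (?\<sigma> i) = i" using bij by (meson bij_betw_inv_into_right)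
        then show "?\<phi> x i \<in> A i" using x \<sigma>S[OF i] i by (auto simp: PiE_iff)
      qed simp
      ultimately show "x \<in> ?\<phi> -` PiE S' A \<inter> space (PiM S (\<lambda>_. N))" by simp
    qed
    have AS: "\<And>i. i \<in> S \<Longrightarrow> A (\<pi> i) \<in> sets N" using A bij bij_betwE by blast
    have "emeasure (distr (PiM S (\<lambda>_. N)) (PiM S' (\<lambda>_. N)) ?\<phi>) (PiE S' A)
          = emeasure (PiM S (\<lambda>_. N)) (PiE S (\<lambda>i. A (\<pi> i)))"
      using A \<phi>m S' by (subst emeasure_distr) (auto simp: pre intro!: sets_PiM_I_finite)
    also have "\<dots> = (\<Prod>i\<in>S. emeasure N (A (\<pi> i)))"
      using AS S by (simp add: P.emeasure_PiM)
    also have "\<dots> = (\<Prod>i\<in>S'. emeasure N (A i))"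
      by (rule prod.reindex_bij_betw[OF bij])
    finally show "emeasure (distr (PiM S (\<lambda>_. N)) (PiM S' (\<lambda>_. N)) ?\<phi>) (PiE S' A) = (\<Prod>i\<in>S'. emeasure N (A i))" .
  qed simp
qed

lemma W_relabel:
  assumes S: "finite S" "r \<notin> S" and S': "r' \<notin> S'" and bij: "bij_betw \<pi> S S'"
  shows "W r' S' q = W r S q"
proof -
  let ?\<sigma> = "inv_into S \<pi>"
  let ?\<phi> = "\<lambda>x. \<lambda>i\<in>S'. x (?\<sigma> i)"
  define \<rho> where "\<rho> = \<pi>(r := r')"
  have fS': "finite S'" using bij S bij_betw_finite by blast
  have \<sigma>S: "?\<sigma> i \<in> S" if "i \<in> S'" for i
    using bij that by (metis bij_betw_def inv_into_into)
  have \<phi>m: "?\<phi> \<in> measurable (PiM S (\<lambda>_. N)) (PiM S' (\<lambda>_. N))"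
    by (rule measurable_restrict) (use \<sigma>S in \<open>auto intro: measurable_component_singleton\<close>)
  have \<pi>S: "\<pi> i \<in> S'" if "i \<in> S" for i using bij that bij_betwE by blast
  have inj: "inj_on \<rho> (insert r S)"
    using bij S S' \<pi>S by (auto simp: \<rho>_def inj_on_def bij_betw_def)
  have img: "\<rho> ` insert r S - {\<rho> r} = S'"
    using bij S S' by (auto simp: \<rho>_def bij_betw_def)
  have \<rho>r: "\<rho> r = r'" by (simp add: \<rho>_def)
  have "W r' S' q = (\<integral>\<^sup>+ x. TW S' r' (x(r' := q)) \<partial>distr (PiM S (\<lambda>_. N)) (PiM S' (\<lambda>_. N)) ?\<phi>)"
    unfolding W_def distr_reindex[OF S(1) bij] ..
  also have "\<dots> = (\<integral>\<^sup>+ x. TW S' r' ((?\<phi> x)(r' := q)) \<partial>PiM S (\<lambda>_. N))"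
    by (rule nn_integral_distr[OF \<phi>m]) (unfold distr_reindex[OF S(1) bij], rule TW_upd_meas[OF fS'])
  also have "\<dots> = (\<integral>\<^sup>+ x. TW S r (x(r := q)) \<partial>PiM S (\<lambda>_. N))"
  proof (intro nn_integral_cong)
    fix x
    have "TW S' r' ((?\<phi> x)(r' := q)) = TW S r (((?\<phi> x)(r' := q)) \<circ> \<rho>)"
      using TW_relabel[OF inj, of "(?\<phi> x)(r' := q)"] img \<rho>r by simp
    also have "\<dots> = TW S r (x(r := q))"
    proof (rule TW_cong)
      fix i assume i: "i \<in> insert r S"
      show "(((?\<phi> x)(r' := q)) \<circ> \<rho>) i = (x(r := q)) i"
      proof (cases "i = r")
        case True then show ?thesis by (simp add: \<rho>r)
      next
        case False
        then have "i \<in> S" "\<rho> i = \<pi> i" using i by (auto simp: \<rho>_def)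
        moreover have "\<pi> i \<noteq> r'" using \<pi>S[OF \<open>i \<in> S\<close>] S' by auto
        moreover have "?\<sigma> (\<pi> i) = i" using bij \<open>i \<in> S\<close> by (simp add: bij_betw_def)
        ultimately show ?thesis using \<pi>S[OF \<open>i \<in> S\<close>] False by simp
      qed
    qed
    finally show "TW S' r' ((?\<phi> x)(r' := q)) = TW S r (x(r := q))" .
  qed
  finally show ?thesis unfolding W_def .
qed


definition G :: "nat \<Rightarrow> 'a \<Rightarrow> ennreal" where
  "G n q = W 0 {1..n} q"

definition g :: "nat \<Rightarrow> 'a \<Rightarrow> ennreal" where
  "g j q = (\<integral>\<^sup>+ y. mayer_abs v q y * G j y \<partial>N)"

lemma W_card:
  assumes "finite S" "r \<notin> S"
  shows "W r S q = G (card S) q"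
proof -
  obtain h where h: "bij_betw h {1..card S} S" using ex_bij_betw_nat_finite_1[OF assms(1)] by blast
  show ?thesis unfolding G_def
    by (rule W_relabel[OF _ _ assms(2) h]) auto
qed

lemma G_0: "G 0 q = 1"
proof -
  have "{E. is_tree {0} E} = {{}}"
  proof -
    have "edges {0} = {}" by (auto simp: edges_def)
    then show ?thesis by (auto simp: is_tree_iff)
  qed
  then have T1: "TW {} 0 y = 1" for y by (simp add: TW_def)
  have e: "{1..0::nat} = {}" by simp
  show ?thesis unfolding G_def W_def e by (subst P.nn_integral_empty) (simp_all add: T1)
qed

lemma sum_pow_card:
  fixes h :: "nat \<Rightarrow> ennreal"
  assumes A: "finite A"
  shows "(\<Sum>B\<in>Pow A. h (card B)) = (\<Sum>j\<le>card A. of_nat (card A choose j) * h j)"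
proof -
  have "(\<Sum>B\<in>Pow A. h (card B)) = (\<Sum>j\<le>card A. \<Sum>B\<in>{B. B \<in> Pow A \<and> card B = j}. h (card B))"
    by (rule sum.group[symmetric]) (use A in \<open>auto intro: card_mono\<close>)
  also have "\<dots> = (\<Sum>j\<le>card A. of_nat (card A choose j) * h j)"
  proof (intro sum.cong refl)
    fix j
    have "(\<Sum>B\<in>{B. B \<in> Pow A \<and> card B = j}. h (card B)) = (\<Sum>B\<in>{B. B \<subseteq> A \<and> card B = j}. h j)"
      by (intro sum.cong) auto
    also have "\<dots> = of_nat (card A choose j) * h j"
      using n_subsets[OF A, of j] by simp
    finally show "(\<Sum>B\<in>{B. B \<in> Pow A \<and> card B = j}. h (card B)) = of_nat (card A choose j) * h j" .
  qed
  finally show ?thesis .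
qed

lemma G_rec:
  "G (Suc n) q = (\<Sum>j\<le>n. of_nat (n choose j) * of_nat (Suc j) * g j q * G (n - j) q)"
proof -
  let ?S = "{1..Suc n}"
  let ?h = "\<lambda>k. of_nat (Suc k) * g k q * G (n - k) q"
  have "G (Suc n) q = (\<Sum>B\<in>{B. 1 \<in> B \<and> B \<subseteq> ?S}. \<Sum>c\<in>B.
            (\<integral>\<^sup>+ y. mayer_abs v q y * W c (B - {c}) y \<partial>N) * W 0 (?S - B) q)"
    unfolding G_def by (rule W_decomp) auto
  also have "\<dots> = (\<Sum>B\<in>{B. 1 \<in> B \<and> B \<subseteq> ?S}. ?h (card B - 1))"
  proof (intro sum.cong refl)
    fix B assume B: "B \<in> {B. 1 \<in> B \<and> B \<subseteq> ?S}"
    have fB: "finite B" using B finite_subset by blast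
    have cB: "card B \<ge> 1" using B fB by (metis card_0_eq empty_iff less_one mem_Collect_eq not_le)
    have cSB: "card (?S - B) = n - (card B - 1)"
      using B fB cB by (subst card_Diff_subset) auto
    have "(\<Sum>c\<in>B. (\<integral>\<^sup>+ y. mayer_abs v q y * W c (B - {c}) y \<partial>N) * W 0 (?S - B) q)
          = (\<Sum>c\<in>B. g (card B - 1) q * G (n - (card B - 1)) q)"
    proof (intro sum.cong refl)
      fix c assume c: "c \<in> B"
      have "W c (B - {c}) y = G (card B - 1) y" for y
        using W_card[of "B - {c}" c y] fB c by simp
      moreover have "W 0 (?S - B) q = G (n - (card B - 1)) q"
        using W_card[of "?S - B" 0 q] cSB by simp
      ultimately show "(\<integral>\<^sup>+ y. mayer_abs v q y * W c (B - {c}) y \<partial>N) * W 0 (?S - B) q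
                       = g (card B - 1) q * G (n - (card B - 1)) q"
        by (simp add: g_def)
    qed
    also have "\<dots> = ?h (card B - 1)"
      using cB by (simp add: mult_ac)
    finally show "(\<Sum>c\<in>B. (\<integral>\<^sup>+ y. mayer_abs v q y * W c (B - {c}) y \<partial>N) * W 0 (?S - B) q) = ?h (card B - 1)" .
  qed
  also have "\<dots> = (\<Sum>B'\<in>Pow {2..Suc n}. ?h (card B'))"
  proof (rule sum.reindex_bij_witness[where i="insert 1" and j="\<lambda>B. B - {1}"], goal_cases)
    case (5 B)
    then have fB: "finite B" using finite_subset by blast
    have "1 \<in> B" using 5 by simp
    then have "card (B - {1}) = card B - 1" using fB by (simp add: card_Diff_singleton)
    then show ?case by simp
  qed auto
  also have "\<dots> = (\<Sum>j\<le>n. of_nat (n choose j) * ?h j)"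
    using sum_pow_card[of "{2..Suc n}" ?h] by simp
  finally show ?thesis by (simp add: mult_ac)
qed


end



context mayer_setup
begin

interpretation P: product_sigma_finite "\<lambda>_. N"
  by (simp add: product_sigma_finite_def sf_N)

lemma meas_N_borel: "measurable K N = measurable K borel"
  by (rule measurable_cong_sets) (simp_all add: sets_N)

lemma meas_borel_N: "measurable N K = measurable borel K"
  by (rule measurable_cong_sets) (simp_all add: sets_N)

lemma G_meas_N: "G n \<in> borel_measurable N"
proof -
  interpret S: finite_product_sigma_finite "\<lambda>_. N" "{1..n}" by standard simp
  have "(\<lambda>p. TW {1..n} 0 ((snd p)(0 := fst p))) \<in> borel_measurable (N \<Otimes>\<^sub>M PiM {1..n} (\<lambda>_. N))"
  proof (rule TW_meas)
    fix i assume i: "i \<in> insert 0 {1..n}"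
    show "(\<lambda>p. ((snd p)(0 := fst p)) i) \<in> measurable (N \<Otimes>\<^sub>M PiM {1..n} (\<lambda>_. N)) borel"
    proof (cases "i = 0")
      case True
      then show ?thesis using measurable_fst[of N "PiM {1..n} (\<lambda>_. N)"] by (simp add: meas_N_borel)
    next
      case False
      then have "i \<in> {1..n}" using i by simp
      then show ?thesis using False measurable_compose[OF measurable_snd comp_meas] by simp
    qed
  qed simp
  then have "(\<lambda>q. \<integral>\<^sup>+ x. TW {1..n} 0 (x(0 := q)) \<partial>PiM {1..n} (\<lambda>_. N)) \<in> borel_measurable N"
    by (intro S.borel_measurable_nn_integral) (simp add: case_prod_unfold)
  then show ?thesis unfolding G_def W_def .
qed

lemma G_meas[measurable]: "G n \<in> borel_measurable borel"
  using G_meas_N by (simp add: meas_borel_N)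

definition aa :: "nat \<Rightarrow> 'a \<Rightarrow> ennreal" where
  "aa n q = ennreal (1 / fact n) * G n q"

lemma aa_meas[measurable]: "aa n \<in> borel_measurable borel"
  unfolding aa_def by measurable

lemma aa_0: "aa 0 q = 1" by (simp add: aa_def G_0)

lemma T_eq: "T_circ lam v z q = (\<Sum>n. aa n q)"
proof -
  have I: "insert 0 {1..n} = {0..n}" for n :: nat by auto
  have "T_circ lam v z q = 1 + (\<Sum>m. aa (Suc m) q)"
    unfolding T_circ_def aa_def G_def W_def TW_def Mf_def trees_def I Let_def ..
  also have "\<dots> = (\<Sum>n. aa n q)"
    using sums_unique[OF sums_Suc[OF summable_sums[OF summableI[of "\<lambda>m. aa (Suc m) q"]]]]
    by (simp add: aa_0 add.commute)
  finally show ?thesis .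
qed

lemma aa_le_T: "aa n q \<le> (\<Sum>n. aa n q)"
proof -
  have "aa n q \<le> (\<Sum>i<Suc n. aa i q)" by (rule member_le_sum) auto
  also have "\<dots> \<le> (\<Sum>n. aa n q)" by (rule sum_le_suminf) auto
  finally show ?thesis .
qed

lemma g_le_G: "g j q \<le> G (Suc j) q"
proof -
  have "g j q \<le> of_nat (j choose j) * of_nat (Suc j) * g j q * G (j - j) q"
  proof -
    have "1 * g j q \<le> of_nat (Suc j) * g j q"
      by (rule mult_right_mono) simp_all
    then have "g j q \<le> of_nat (Suc j) * g j q" by simp
    then show ?thesis by (simp add: G_0)
  qed
  also have "\<dots> \<le> G (Suc j) q"
    unfolding G_rec by (rule member_le_sum) auto
  finally show ?thesis .
qed

lemma int_partial:
  "(\<integral>\<^sup>+ y. mayer_abs v q y * (\<Sum>n<K. aa n y) \<partial>N) = (\<Sum>n<K. ennreal (1 / fact n) * g n q)"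
proof -
  have m: "(\<lambda>y. mayer_abs v q y) \<in> borel_measurable N"
    by (intro mayer_meas') (auto simp: meas_N_borel intro: measurable_const measurable_ident_sets)
  have "(\<integral>\<^sup>+ y. mayer_abs v q y * (\<Sum>n<K. aa n y) \<partial>N) = (\<integral>\<^sup>+ y. (\<Sum>n<K. ennreal (1 / fact n) * (mayer_abs v q y * G n y)) \<partial>N)"
    by (simp add: sum_distrib_left aa_def mult_ac)
  also have "\<dots> = (\<Sum>n<K. \<integral>\<^sup>+ y. ennreal (1 / fact n) * (mayer_abs v q y * G n y) \<partial>N)"
    using m G_meas_N by (intro nn_integral_sum) auto
  also have "\<dots> = (\<Sum>n<K. ennreal (1 / fact n) * g n q)"
    using m G_meas_N by (intro sum.cong refl) (simp add: nn_integral_cmult g_def)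
  finally show ?thesis .
qed

lemma int_full:
  "(\<integral>\<^sup>+ y. mayer_abs v q y * (\<Sum>n. aa n y) \<partial>N) = (\<Sum>n. ennreal (1 / fact n) * g n q)"
proof -
  have m: "(\<lambda>y. mayer_abs v q y) \<in> borel_measurable N"
    by (intro mayer_meas') (auto simp: meas_N_borel intro: measurable_const measurable_ident_sets)
  have "(\<integral>\<^sup>+ y. mayer_abs v q y * (\<Sum>n. aa n y) \<partial>N) = (\<integral>\<^sup>+ y. (\<Sum>n. ennreal (1 / fact n) * (mayer_abs v q y * G n y)) \<partial>N)"
    by (intro nn_integral_cong, subst ennreal_suminf_cmult[symmetric]) (simp add: aa_def mult_ac del: ennreal_suminf_cmult)
  also have "\<dots> = (\<Sum>n. \<integral>\<^sup>+ y. ennreal (1 / fact n) * (mayer_abs v q y * G n y) \<partial>N)"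
    using m G_meas_N by (intro nn_integral_suminf) auto
  also have "\<dots> = (\<Sum>n. ennreal (1 / fact n) * g n q)"
    using m G_meas_N by (simp add: nn_integral_cmult g_def)
  finally show ?thesis .
qed

end



lemma rec_to_real:
  fixes Ge ge :: "nat \<Rightarrow> ennreal"
  assumes rec: "Ge (Suc n) = (\<Sum>j\<le>n. of_nat (n choose j) * of_nat (Suc j) * ge j * Ge (n - j))"
    and fg: "\<And>j. j \<le> n \<Longrightarrow> ge j < top" and fG: "\<And>j. j \<le> n \<Longrightarrow> Ge j < top"
  shows "enn2real (Ge (Suc n)) = (\<Sum>j\<le>n. of_nat (n choose j) * of_nat (Suc j) * enn2real (ge j) * enn2real (Ge (n - j)))"
proof -
  define F where "F j = of_nat (n choose j) * of_nat (Suc j) * ge j * Ge (n - j)" for j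
  have t: "F j < top" if "j \<in> {..n}" for j
    using fg[of j] fG[of "n - j"] that by (simp add: F_def ennreal_mult_less_top of_nat_less_top)
  have "enn2real (Ge (Suc n)) = enn2real (\<Sum>j\<le>n. F j)" unfolding rec F_def ..
  also have "\<dots> = (\<Sum>j\<le>n. enn2real (F j))" using enn2real_sum[of "{..n}" F] t by simp
  also have "\<dots> = (\<Sum>j\<le>n. of_nat (n choose j) * of_nat (Suc j) * enn2real (ge j) * enn2real (Ge (n - j)))"
    unfolding F_def by (simp add: enn2real_mult del: of_nat_Suc)
  finally show ?thesis .
qed

lemma term_real:
  fixes x :: ennreal
  assumes "x < top"
  shows "ennreal (1 / fact n) * x = ennreal (enn2real x / fact n)"
proof -
  have "ennreal (1 / fact n) * x = ennreal (1 / fact n) * ennreal (enn2real x)"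
    using assms by simp
  also have "\<dots> = ennreal (1 / fact n * enn2real x)"
    by (rule ennreal_mult[symmetric]) auto
  finally show ?thesis by simp
qed

lemma fact_factor_ne0: "ennreal (1 / fact n) \<noteq> 0"
  by simp

context mayer_setup
begin

lemma G_fin:
  assumes "\<And>j. j < K \<Longrightarrow> g j q < top"
  shows "n \<le> K \<Longrightarrow> G n q < top"
proof (induction n rule: less_induct)
  case (less n)
  show ?case
  proof (cases n)
    case 0 then show ?thesis by (simp add: G_0)
  next
    case (Suc m)
    have "of_nat (m choose j) * of_nat (Suc j) * g j q * G (m - j) q < top" if "j \<le> m" for j
    proof -
      have "g j q < top" using assms that less.prems Suc by simp
      moreover have "G (m - j) q < top" using less.IH[of "m - j"] less.prems Suc by simp
      ultimately show ?thesis by (simp add: ennreal_mult_less_top of_nat_less_top)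
    qed
    then show ?thesis unfolding Suc G_rec by simp
  qed
qed

lemma dir1:
  assumes fin: "\<And>q. T_circ lam v z q < \<infinity>"
  shows "\<exists>a :: 'a \<Rightarrow> real. a \<in> borel_measurable borel \<and> (\<forall>x. a x \<ge> 0) \<and>
            (\<forall>q. (\<integral>\<^sup>+ y. mayer_abs v q y * ennreal (exp (a y)) \<partial>(lam_z lam z)) \<le> ennreal (a q))"
proof -
  define T where "T q = (\<Sum>n. aa n q)" for q
  have Tfin: "T q < top" for q using fin[of q] by (simp add: T_eq T_def)
  have T1: "1 \<le> T q" for q using aa_le_T[of 0 q] by (simp add: aa_0 T_def)
  have Tr1: "1 \<le> enn2real (T q)" for q
    using enn2real_mono[OF T1 Tfin, of q] by simp
  define a where "a q = ln (enn2real (T q))" for q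
  have meas: "a \<in> borel_measurable borel" unfolding a_def T_def by measurable
  have nn: "a x \<ge> 0" for x using Tr1[of x] by (simp add: a_def)
  have expa: "ennreal (exp (a y)) = T y" for y
    using Tr1[of y] Tfin[of y] by (simp add: a_def)
  have key: "(\<integral>\<^sup>+ y. mayer_abs v q y * ennreal (exp (a y)) \<partial>N) \<le> ennreal (a q)" for q
  proof -
    define Gr where "Gr n = enn2real (G n q)" for n
    define gr where "gr j = enn2real (g j q)" for j
    have Gfin: "G n q < top" for n
    proof -
      have "aa n q < top" using aa_le_T[of n q] Tfin[of q] by (simp add: T_def)
      then show ?thesis by (auto simp: aa_def ennreal_mult_less_top)
    qed
    have gfin: "g j q < top" for j using g_le_G[of j q] Gfin[of "Suc j"] le_less_trans by blast
    have rec: "Gr (Suc n) = (\<Sum>j\<le>n. of_nat (n choose j) * of_nat (Suc j) * gr j * Gr (n - j))" for n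
      unfolding Gr_def gr_def by (rule rec_to_real[OF G_rec]) (simp_all add: Gfin gfin)
    have G0: "Gr 0 = 1" by (simp add: Gr_def G_0)
    have aaR: "aa n q = ennreal (Gr n / fact n)" for n
      unfolding aa_def Gr_def by (rule term_real[OF Gfin])
    have Gnn: "Gr n / fact n \<ge> 0" for n by (simp add: Gr_def)
    have "(\<Sum>n. ennreal (Gr n / fact n)) \<noteq> top" using Tfin[of q] by (simp add: T_def aaR[symmetric])
    then have summ: "summable (\<lambda>n. Gr n / fact n)" by (rule summable_suminf_not_top[OF Gnn])
    have Teq: "enn2real (T q) = (\<Sum>n. Gr n / fact n)"
      unfolding T_def aaR suminf_ennreal2[OF Gnn summ] using summ Gnn by (simp add: suminf_nonneg)
    have low: "(\<Sum>j<K. gr j / fact j) \<le> a q" for K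
    proof -
      have "exp (\<Sum>j<K. gr j / fact j) \<le> enn2real (T q)"
        unfolding Teq by (rule seq_lower_G[OF G0 _ rec summ]) (simp add: gr_def)
      then show ?thesis unfolding a_def using Tr1[of q] by (subst ln_ge_iff) auto
    qed
    have "(\<integral>\<^sup>+ y. mayer_abs v q y * ennreal (exp (a y)) \<partial>N) = (\<Sum>n. ennreal (1 / fact n) * g n q)"
      unfolding expa T_def by (rule int_full)
    also have "\<dots> \<le> ennreal (a q)"
    proof (rule suminf_le_const[OF summableI])
      fix K
      have "(\<Sum>n<K. ennreal (1 / fact n) * g n q) = (\<Sum>n<K. ennreal (gr n / fact n))"
        unfolding gr_def by (intro sum.cong refl term_real gfin)
      also have "\<dots> = ennreal (\<Sum>n<K. gr n / fact n)"
        by (rule sum_ennreal) (simp add: gr_def)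
      also have "\<dots> \<le> ennreal (a q)" using low[of K] by (simp add: ennreal_leI)
      finally show "(\<Sum>n<K. ennreal (1 / fact n) * g n q) \<le> ennreal (a q)" .
    qed
    finally show ?thesis .
  qed
  show ?thesis using meas nn key by blast
qed

lemma dir2:
  assumes nn: "\<And>x. a x \<ge> 0"
    and ineq: "\<And>q. (\<integral>\<^sup>+ y. mayer_abs v q y * ennreal (exp (a y)) \<partial>(lam_z lam z)) \<le> ennreal (a q)"
  shows "T_circ lam v z q < \<infinity>"
proof -
  have claim: "\<forall>q. (\<Sum>n<K. aa n q) \<le> ennreal (exp (a q))" for K
  proof (induction K)
    case 0 then show ?case by simp
  next
    case (Suc K)
    show ?case
    proof
      fix q
      define Gr where "Gr n = enn2real (G n q)" for n
      define gr where "gr j = enn2real (g j q)" for j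
      have s1: "(\<Sum>j<K. ennreal (1 / fact j) * g j q) \<le> ennreal (a q)"
      proof -
        have "(\<Sum>j<K. ennreal (1 / fact j) * g j q) = (\<integral>\<^sup>+ y. mayer_abs v q y * (\<Sum>n<K. aa n y) \<partial>N)"
          by (rule int_partial[symmetric])
        also have "\<dots> \<le> (\<integral>\<^sup>+ y. mayer_abs v q y * ennreal (exp (a y)) \<partial>N)"
          using Suc.IH by (intro nn_integral_mono mult_left_mono) auto
        also have "\<dots> \<le> ennreal (a q)" by (rule ineq)
        finally show ?thesis .
      qed
      have gfin: "g j q < top" if "j < K" for j
      proof -
        have "ennreal (1 / fact j) * g j q \<le> (\<Sum>j<K. ennreal (1 / fact j) * g j q)"
          by (rule member_le_sum) (use that in auto)
        also have "\<dots> < top" using s1 by (simp add: le_less_trans)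
        finally show ?thesis by (auto simp: ennreal_mult_less_top)
      qed
      have Gfin: "G n q < top" if "n \<le> K" for n by (rule G_fin[OF gfin that])
      have rec: "Gr (Suc n) = (\<Sum>j\<le>n. of_nat (n choose j) * of_nat (Suc j) * gr j * Gr (n - j))"
        if "Suc n \<le> K" for n
        unfolding Gr_def gr_def using that by (intro rec_to_real[OF G_rec] gfin Gfin) auto
      have G0: "Gr 0 = 1" by (simp add: Gr_def G_0)
      have up: "(\<Sum>n\<le>K. Gr n / fact n) \<le> exp (\<Sum>j<K. gr j / fact j)"
        by (rule seq_upper_G[OF G0 _ rec]) (auto simp: gr_def)
      have "ennreal (\<Sum>j<K. gr j / fact j) = (\<Sum>j<K. ennreal (1 / fact j) * g j q)"
      proof -
        have "ennreal (\<Sum>j<K. gr j / fact j) = (\<Sum>j<K. ennreal (gr j / fact j))"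
          by (rule sum_ennreal[symmetric]) (simp add: gr_def)
        also have "\<dots> = (\<Sum>j<K. ennreal (1 / fact j) * g j q)"
          unfolding gr_def by (intro sum.cong refl term_real[symmetric] gfin) auto
        finally show ?thesis .
      qed
      then have "ennreal (\<Sum>j<K. gr j / fact j) \<le> ennreal (a q)" using s1 by simp
      then have le: "(\<Sum>j<K. gr j / fact j) \<le> a q" using nn[of q] by simp
      have "(\<Sum>n<Suc K. aa n q) = (\<Sum>n\<le>K. ennreal (Gr n / fact n))"
        unfolding lessThan_Suc_atMost aa_def Gr_def by (intro sum.cong refl term_real Gfin) auto
      also have "\<dots> = ennreal (\<Sum>n\<le>K. Gr n / fact n)"
        by (rule sum_ennreal) (simp add: Gr_def)
      also have "\<dots> \<le> ennreal (exp (a q))"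
        using order_trans[OF up] le by (simp add: ennreal_leI)
      finally show "(\<Sum>n<Suc K. aa n q) \<le> ennreal (exp (a q))" .
    qed
  qed
  have "T_circ lam v z q \<le> ennreal (exp (a q))"
    unfolding T_eq by (rule suminf_le_const[OF summableI]) (use claim in blast)
  then show ?thesis by (simp add: le_less_trans)
qed

theorem main_equiv:
  "(\<forall>q. T_circ lam v z q < \<infinity>) \<longleftrightarrow>
   (\<exists>a :: 'a \<Rightarrow> real. a \<in> borel_measurable borel \<and> (\<forall>x. a x \<ge> 0) \<and>
      (\<forall>q. (\<integral>\<^sup>+ y. mayer_abs v q y * ennreal (exp (a y)) \<partial>(lam_z lam z)) \<le> ennreal (a q)))"
  using dir1 dir2 by blast

end


unbundle vec_syntax

lemma sigma_finite_lam:
  fixes lam :: "'a::polish_space measure"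
  assumes sets_lam: "sets lam = sets borel"
    and lam_bdd: "\<And>B. B \<in> sets borel \<Longrightarrow> bounded B \<Longrightarrow> emeasure lam B < \<infinity>"
  shows "sigma_finite_measure lam"
proof
  have sp: "space lam = UNIV" using sets_eq_imp_space_eq[OF sets_lam] by simp
  let ?A = "range (\<lambda>n::nat. ball (undefined::'a) (real n))"
  show "\<exists>A. countable A \<and> A \<subseteq> sets lam \<and> \<Union> A = space lam \<and> (\<forall>a\<in>A. emeasure lam a \<noteq> \<infinity>)"
  proof (intro exI[of _ ?A] conjI)
    show "countable ?A" by simp
    show "?A \<subseteq> sets lam"
    proof
      fix a assume "a \<in> ?A"
      then obtain n :: nat where a: "a = ball undefined (real n)" by blast
      show "a \<in> sets lam" unfolding a sets_lam by (rule borel_open[OF open_ball])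
    qed
    show "\<Union> ?A = space lam"
    proof (intro equalityI subsetI)
      fix x assume "x \<in> space lam"
      obtain n :: nat where "dist undefined x < real n" using reals_Archimedean2 by blast
      then show "x \<in> \<Union> ?A" by auto
    qed (simp add: sp)
    show "\<forall>a\<in>?A. emeasure lam a \<noteq> \<infinity>"
    proof
      fix a assume "a \<in> ?A"
      then obtain n :: nat where a: "a = ball undefined (real n)" by blast
      have "emeasure lam a < \<infinity>" unfolding a by (rule lam_bdd[OF borel_open[OF open_ball] bounded_ball])
      then show "emeasure lam a \<noteq> \<infinity>" by simp
    qed
  qed
qed

theorem mainTheorem8:
  fixes lam :: "'a::polish_space measure"
    and v :: "'a \<Rightarrow> 'a \<Rightarrow> ennreal"
    and z :: "'a \<Rightarrow> real"
  assumes sets_lam: "sets lam = sets borel"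
    and lam_bdd: "\<And>B. B \<in> sets borel \<Longrightarrow> bounded B \<Longrightarrow> emeasure lam B < \<infinity>"
    and v_meas: "(\<lambda>p. v (fst p) (snd p)) \<in> borel_measurable (borel \<Otimes>\<^sub>M borel)"
    and v_sym: "\<And>x y. v x y = v y x"
    and z_meas: "z \<in> borel_measurable borel"
    and z_nonneg: "\<And>x. z x \<ge> 0"
  shows "(\<forall>q. T_circ lam v z q < \<infinity>) \<longleftrightarrow>
         (\<exists>a :: 'a \<Rightarrow> real. a \<in> borel_measurable borel \<and> (\<forall>x. a x \<ge> 0) \<and>
            (\<forall>q. (\<integral>\<^sup>+ y. mayer_abs v q y * ennreal (exp (a y)) \<partial>(lam_z lam z)) \<le> ennreal (a q)))"
proof -
  interpret mayer_setup lam v z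
    by (rule mayer_setup.intro[OF sets_lam sigma_finite_lam[OF sets_lam lam_bdd] v_meas v_sym z_meas z_nonneg])
  show ?thesis by (rule main_equiv)
qed


end
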